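(* Let $0<\alpha<1$ and $1\le i\le k\le 6$. Let $\varphi_n=\sum_{m=0}^{n}\omega^{(k,i)}_m$ (so that $\omega^{(k,i)}(\xi)=(1-\xi)\varphi^{(k,i)}(\xi)$ as formal power series, with the weights $\omega^{(k,i)}_m$ defined in the context), let $g^{(1-\alpha)}_n=(-1)^n\binom{1-\alpha}{n}$ be the coefficients of $(1-\xi)^{1-\alpha}$, and let $\psi^{(k,i)}(\xi)=(1-\xi)^{1-\alpha}\varphi^{(k,i)}(\xi)=\sum_{n\ge0}\psi_n\xi^n$, i.e. $\psi_n=\sum_{m=0}^{n}g^{(1-\alpha)}_{n-m}\varphi_m$. Then $\sum_{n=0}^{\infty}|\psi_n|<\infty$.
   Context: Uniform grid $t_n=n\Delta t$, $\Delta t>0$, $I_j=[t_{j-1},t_j]$. For a function $u$ and integers $m\ge1$, $j$, $q$, let $p^{m}_{j,q}$ be the polynomial of degree at most $m$ interpolating $u$ at $t_{j+q-m-1},\dots,t_{j+q-1}$. For $1\le i\le k\le 6$ and $n\ge k$, let $P^{k}_{i,n}$ be the continuous piecewise polynomial on $[0,t_n]$ equal on $I_j$ to $p^{k-1}_{j,k-j}$ for $1\le j\le k-i$, to $p^{k}_{j,i}$ for $k-i+1\le j\le n-i+1$, and to $p^{k}_{j,n+1-j}$ for $n-i+2\le j\le n$, and set $D^{\alpha}_{k,i}u_n=\frac{1}{\Gamma(1-\alpha)}\int_0^{t_n}(t_n-\xi)^{-\alpha}(P^{k}_{i,n})'(\xi)\,\mathrm{d}\xi$. This is a linear combination of $u_0=u(t_0),\dots,u_n=u(t_n)$;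 for $k\le j\le n$ the coefficient of $u_j$ in $(\Delta t)^{\alpha}D^{\alpha}_{k,i}u_n$ depends only on $n-j$ and is denoted $\omega^{(k,i)}_{n-j}$; this defines $\omega^{(k,i)}_m$ for all $m\ge0$. For real $\beta$, $\binom{\beta}{n}=\beta(\beta-1)\cdots(\beta-n+1)/n!$. *)

theory Defs
  imports "HOL-Analysis.Analysis" "HOL-Computational_Algebra.Polynomial"
begin

text \<open>Grid with step 1 (the weights are independent of the step size), nodes t_l = l.
  interp v m a is the polynomial of degree at most m interpolating the nodal values v
  at the nodes a, a+1, ..., a+m (Lagrange form).\<close>
definition interp :: "(int \<Rightarrow> real) \<Rightarrow> nat \<Rightarrow> int \<Rightarrow> real poly" where
  "interp v m a = (\<Sum>r\<in>{0..m}. smult (v (a + int r))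
      (\<Prod>s\<in>{0..m}-{r}. smult (1 / (real r - real s)) [:- real_of_int (a + int s), 1:]))"

definition pjq :: "(int \<Rightarrow> real) \<Rightarrow> nat \<Rightarrow> int \<Rightarrow> int \<Rightarrow> real poly" where
  "pjq v m j q = interp v m (j + q - int m - 1)"

definition piece :: "nat \<Rightarrow> nat \<Rightarrow> nat \<Rightarrow> nat \<Rightarrow> (int \<Rightarrow> real) \<Rightarrow> real poly" where
  "piece k i n j v =
     (if int j \<le> int k - int i then pjq v (k - 1) (int j) (int k - int j)
      else if int j \<le> int n - int i + 1 then pjq v k (int j) (int i)
      else pjq v k (int j) (int n + 1 - int j))"

text \<open>(Delta t)^alpha D^alpha_{k,i} u_n with Delta t = 1 and nodal values v.\<close>
definition Dki :: "real \<Rightarrow> nat \<Rightarrow> nat \<Rightarrow> nat \<Rightarrow> (int \<Rightarrow> real) \<Rightarrow> real" where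
  "Dki \<alpha> k i n v = (1 / Gamma (1 - \<alpha>)) *
     (\<Sum>j=1..n. integral {real j - 1 .. real j}
        (\<lambda>\<xi>. (real n - \<xi>) powr (- \<alpha>) * poly (pderiv (piece k i n j v)) \<xi>))"

text \<open>omega^{(k,i)}_m: coefficient of u_j in (Delta t)^alpha D u_n, taken at j = k, n = k + m.\<close>
definition omega :: "real \<Rightarrow> nat \<Rightarrow> nat \<Rightarrow> nat \<Rightarrow> real" where
  "omega \<alpha> k i m = Dki \<alpha> k i (k + m) (\<lambda>l. if l = int k then 1 else 0)"

definition phi :: "real \<Rightarrow> nat \<Rightarrow> nat \<Rightarrow> nat \<Rightarrow> real" where
  "phi \<alpha> k i n = (\<Sum>m=0..n. omega \<alpha> k i m)"

definition gcoef :: "real \<Rightarrow> nat \<Rightarrow> real" where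
  "gcoef \<beta> n = (-1) ^ n * (\<beta> gchoose n)"

definition psi :: "real \<Rightarrow> nat \<Rightarrow> nat \<Rightarrow> nat \<Rightarrow> real" where
  "psi \<alpha> k i n = (\<Sum>m=0..n. gcoef (1 - \<alpha>) (n - m) * phi \<alpha> k i m)"

end

theory Submission
  imports Defs "HOL-Computational_Algebra.Formal_Power_Series" "HOL-Real_Asymp.Real_Asymp"
begin


lemma poly_interp:
  "poly (interp v m a) x = (\<Sum>r\<in>{0..m}. v (a + int r) *
      (\<Prod>s\<in>{0..m}-{r}. (x - real_of_int (a + int s)) / (real r - real s)))"
  unfolding interp_def poly_sum poly_smult poly_prod
  by (intro sum.cong prod.cong refl) (simp_all add: field_simps)

lemma interp_cong:
  assumes "\<And>r. r \<le> m \<Longrightarrow> v (a + int r) = w (a + int r)"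
  shows "interp v m a = interp w m a"
  unfolding interp_def using assms by (intro sum.cong) auto

lemma interp_zero:
  assumes "\<And>r. r \<le> m \<Longrightarrow> v (a + int r) = 0"
  shows "interp v m a = 0"
  unfolding interp_def using assms by (intro sum.neutral) auto

lemma interp_node:
  assumes "r \<le> m"
  shows "poly (interp v m a) (real_of_int (a + int r)) = v (a + int r)"
proof -
  have "poly (interp v m a) (real_of_int (a + int r)) =
     (\<Sum>r'\<in>{0..m}. if r' = r then v (a + int r) else 0)"
    unfolding poly_interp
  proof (intro sum.cong refl)
    fix r' assume r': "r' \<in> {0..m}"
    show "v (a + int r') * (\<Prod>s\<in>{0..m}-{r'}. (real_of_int (a + int r) - real_of_int (a + int s)) / (real r' - real s))
        = (if r' = r then v (a + int r) else 0)"
    proof (cases "r' = r")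
      case True
      have "(\<Prod>s\<in>{0..m}-{r'}. (real_of_int (a + int r) - real_of_int (a + int s)) / (real r' - real s)) = 1"
        using True by (intro prod.neutral) auto
      then show ?thesis using True by simp
    next
      case False
      have "(\<Prod>s\<in>{0..m}-{r'}. (real_of_int (a + int r) - real_of_int (a + int s)) / (real r' - real s)) = 0"
        using False assms by (subst prod_zero_iff) auto
      then show ?thesis using False by simp
    qed
  qed
  also have "\<dots> = v (a + int r)" using assms by simp
  finally show ?thesis .
qed

lemma interp_shift_poly:
  "poly (interp v m (a + s)) (x + real_of_int s) = poly (interp (\<lambda>l. v (l + s)) m a) x"
  unfolding poly_interp by (intro sum.cong refl) (simp add: algebra_simps)

lemma interp_shift_pcompose:
  "interp (\<lambda>l. v (l + s)) m a = pcompose (interp v m (a + s)) [:real_of_int s, 1:]"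
  by (rule poly_eq_poly_eq_iff[THEN iffD1], rule ext) (simp add: poly_pcompose interp_shift_poly[symmetric] algebra_simps)

lemma interp_shift_pderiv:
  "poly (pderiv (interp v m (a + s))) (x + real_of_int s) = poly (pderiv (interp (\<lambda>l. v (l + s)) m a)) x"
  unfolding interp_shift_pcompose pderiv_pcompose
  by (simp add: poly_pcompose pderiv_pCons algebra_simps)

lemma interp_sum_fun:
  assumes "finite J"
  shows "interp (\<lambda>l. \<Sum>j\<in>J. w j l) m a = (\<Sum>j\<in>J. interp (w j) m a)"
  unfolding interp_def smult_sum by (rule sum.swap)

lemma degree_interp: "degree (interp v m a) \<le> m"
  unfolding interp_def
proof (intro degree_sum_le)
  fix r assume r: "r \<in> {0..m}"
  have "degree (\<Prod>s\<in>{0..m}-{r}. smult (1 / (real r - real s)) [:- real_of_int (a + int s), 1:]) \<le>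
        sum (degree \<circ> (\<lambda>s. smult (1 / (real r - real s)) [:- real_of_int (a + int s), 1:])) ({0..m}-{r})"
    by (rule degree_prod_sum_le) auto
  also have "\<dots> \<le> sum (\<lambda>_. 1) ({0..m}-{r})"
    by (intro sum_mono) (simp add: degree_smult_le)
  also have "\<dots> = m" using r by simp
  finally show "degree (smult (v (a + int r)) (\<Prod>s\<in>{0..m}-{r}. smult (1 / (real r - real s)) [:- real_of_int (a + int s), 1:])) \<le> m"
    by (meson degree_smult_le order_trans)
qed simp

lemma interp_const:
  assumes "\<And>r. r \<le> m \<Longrightarrow> v (a + int r) = c"
  shows "interp v m a = [:c:]"
proof (rule ccontr)
  assume ne: "interp v m a \<noteq> [:c:]"
  let ?p = "interp v m a - [:c:]"
  have p0: "?p \<noteq> 0" using ne by simp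
  have "degree ?p \<le> m"
    using degree_interp[of v m a] by (intro degree_diff_le) auto
  moreover have "(\<lambda>r. real_of_int (a + int r)) ` {0..m} \<subseteq> {x. poly ?p x = 0}"
    using interp_node[of _ m v a] assms by auto
  then have "card ((\<lambda>r. real_of_int (a + int r)) ` {0..m}) \<le> card {x. poly ?p x = 0}"
    using poly_roots_finite[OF p0] by (intro card_mono) auto
  moreover have "card ((\<lambda>r. real_of_int (a + int r)) ` {0..m}) = Suc m"
    by (subst card_image) (auto simp: inj_on_def)
  ultimately show False using card_poly_roots_bound[OF p0] by simp
qed



lemma powr_has_integral:
  fixes a b x \<alpha> :: real
  assumes "0 < \<alpha>" "\<alpha> < 1" "a \<le> b" "b \<le> x"
  shows "((\<lambda>\<xi>. (x - \<xi>) powr (-\<alpha>)) has_integral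
           ((x - a) powr (1 - \<alpha>) - (x - b) powr (1 - \<alpha>)) / (1 - \<alpha>)) {a..b}"
proof -
  define F where "F = (\<lambda>\<xi>. - ((x - \<xi>) powr (1 - \<alpha>)) / (1 - \<alpha>))"
  have "((\<lambda>\<xi>. (x - \<xi>) powr (-\<alpha>)) has_integral (F b - F a)) {a..b}"
  proof (rule fundamental_theorem_of_calculus_interior[OF assms(3)])
    show "continuous_on {a..b} F"
      unfolding F_def using assms
      by (intro continuous_intros continuous_on_powr') auto
    fix \<xi> assume \<xi>: "\<xi> \<in> {a<..<b}"
    then have pos: "x - \<xi> > 0" using assms by auto
    have "((\<lambda>\<xi>. (x - \<xi>) powr (1 - \<alpha>)) has_real_derivative
          (1 - \<alpha>) * (x - \<xi>) powr (1 - \<alpha> - 1) * (-1)) (at \<xi>)"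
      by (rule DERIV_fun_powr[of "\<lambda>\<xi>. x - \<xi>", simplified]) (use pos in \<open>auto intro!: derivative_eq_intros\<close>)
    then have "(F has_real_derivative (x - \<xi>) powr (-\<alpha>)) (at \<xi>)"
      unfolding F_def using assms pos by (auto intro!: derivative_eq_intros)
    then show "(F has_vector_derivative (x - \<xi>) powr (-\<alpha>)) (at \<xi>)"
      by (simp add: has_real_derivative_iff_has_vector_derivative)
  qed
  then show ?thesis unfolding F_def by (simp add: diff_divide_distrib)
qed

lemma powr_integrable:
  fixes a b x \<alpha> :: real
  assumes "0 < \<alpha>" "\<alpha> < 1" "a \<le> b" "b \<le> x"
  shows "(\<lambda>\<xi>. (x - \<xi>) powr (-\<alpha>)) integrable_on {a..b}"
  using powr_has_integral[OF assms] by blast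

lemma powr_poly_integrable:
  fixes a b x \<alpha> :: real
  assumes "0 < \<alpha>" "\<alpha> < 1" "b \<le> x"
  shows "(\<lambda>\<xi>. (x - \<xi>) powr (-\<alpha>) * poly q \<xi>) integrable_on {a..b}"
proof (cases "a \<le> b")
  case False
  then have "{a..b} = {}" by auto
  then show ?thesis by (simp add: integrable_on_empty)
next
  case True
  have ai: "(\<lambda>\<xi>. (x - \<xi>) powr (-\<alpha>)) absolutely_integrable_on {a..b}"
    by (rule nonnegative_absolutely_integrable_1[OF powr_integrable[OF assms(1,2) True assms(3)]]) simp
  have "(\<lambda>\<xi>. poly q \<xi> * (x - \<xi>) powr (-\<alpha>)) absolutely_integrable_on {a..b}"
  proof (rule absolutely_integrable_bounded_measurable_product_real[OF _ _ _ ai])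
    show "poly q \<in> borel_measurable (lebesgue_on {a..b})"
      by (rule continuous_imp_measurable_on_sets_lebesgue) (auto intro: continuous_intros)
    show "bounded (poly q ` {a..b})"
      by (intro compact_imp_bounded compact_continuous_image) (auto intro: continuous_intros)
  qed auto
  then show ?thesis unfolding absolutely_integrable_on_def by (simp add: mult.commute)
qed



definition dlt :: "nat \<Rightarrow> int \<Rightarrow> real" where
  "dlt j = (\<lambda>l. if l = int j then 1 else 0)"

definition Iint :: "real \<Rightarrow> nat \<Rightarrow> nat \<Rightarrow> nat \<Rightarrow> nat \<Rightarrow> (int \<Rightarrow> real) \<Rightarrow> real" where
  "Iint \<alpha> k i n J v = integral {real J - 1 .. real J}
        (\<lambda>\<xi>. (real n - \<xi>) powr (- \<alpha>) * poly (pderiv (piece k i n J v)) \<xi>)"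

lemma Dki_Iint: "Dki \<alpha> k i n v = (1 / Gamma (1 - \<alpha>)) * (\<Sum>J=1..n. Iint \<alpha> k i n J v)"
  unfolding Dki_def Iint_def ..

lemma omega_Dki: "omega \<alpha> k i m = Dki \<alpha> k i (k + m) (dlt k)"
  unfolding omega_def dlt_def ..

lemma Iint_zero: "piece k i n J v = 0 \<Longrightarrow> Iint \<alpha> k i n J v = 0"
  unfolding Iint_def by simp

lemma piece_delta_zero:
  assumes "1 \<le> k"
   and "(int J \<le> int k - int i \<and> j \<ge> k) \<or>
        (\<not> int J \<le> int k - int i \<and> int J \<le> int n - int i + 1 \<and>
            (int j < int J + int i - int k - 1 \<or> int j > int J + int i - 1)) \<or>
        (\<not> int J \<le> int k - int i \<and> \<not> int J \<le> int n - int i + 1 \<and>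
            (int j < int n - int k \<or> int j > int n))"
  shows "piece k i n J (dlt j) = 0"
  using assms unfolding piece_def pjq_def dlt_def
  by (auto intro!: interp_zero)

lemma piece_zero_below:
  assumes "1 \<le> k" "i \<le> k" "k \<le> j" "int J + int i - 1 < int j" "j \<le> n"
  shows "piece k i n J (dlt j) = 0"
proof -
  consider "int J \<le> int k - int i" | "\<not> int J \<le> int k - int i" "int J \<le> int n - int i + 1"
    | "\<not> int J \<le> int k - int i" "\<not> int J \<le> int n - int i + 1" by blast
  then show ?thesis
  proof cases
    case 1
    then have "piece k i n J (dlt j) = interp (dlt j) (k - 1) (int J + (int k - int J) - int (k - 1) - 1)"
      unfolding piece_def pjq_def by simp
    also have "\<dots> = 0" using assms by (intro interp_zero) (auto simp: dlt_def)
    finally show ?thesis .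
  next
    case 2
    then have "piece k i n J (dlt j) = interp (dlt j) k (int J + int i - int k - 1)"
      unfolding piece_def pjq_def by simp
    also have "\<dots> = 0" using assms by (intro interp_zero) (auto simp: dlt_def)
    finally show ?thesis .
  next
    case 3
    then show ?thesis using assms by linarith
  qed
qed

lemma piece_shift:
  assumes "\<not> int J \<le> int k - int i"
  shows "piece k i (n + s) (J + s) v =
      interp v k ((if int J \<le> int n - int i + 1 then int J + int i - int k - 1 else int n - int k) + int s)
    \<and> piece k i n J (\<lambda>l. v (l + int s)) =
      interp (\<lambda>l. v (l + int s)) k (if int J \<le> int n - int i + 1 then int J + int i - int k - 1 else int n - int k)"
  using assms unfolding piece_def pjq_def by (auto simp: algebra_simps)

lemma Iint_shift:
  assumes "\<not> int J \<le> int k - int i"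
  shows "Iint \<alpha> k i (n + s) (J + s) v = Iint \<alpha> k i n J (\<lambda>l. v (l + int s))"
proof -
  define A where "A = (if int J \<le> int n - int i + 1 then int J + int i - int k - 1 else int n - int k)"
  have p1: "piece k i (n + s) (J + s) v = interp v k (A + int s)"
   and p2: "piece k i n J (\<lambda>l. v (l + int s)) = interp (\<lambda>l. v (l + int s)) k A"
    using piece_shift[OF assms, of n s v] unfolding A_def by auto
  have "Iint \<alpha> k i (n + s) (J + s) v = integral {real (J+s) - 1 .. real (J+s)}
        (\<lambda>\<xi>. (real (n+s) - \<xi>) powr (- \<alpha>) * poly (pderiv (interp v k (A + int s))) \<xi>)"
    unfolding Iint_def p1 ..
  also have "\<dots> = integral {(real (J+s) - 1) - real s .. real (J+s) - real s}
        (\<lambda>\<xi>. (real (n+s) - (\<xi> + real s)) powr (- \<alpha>) * poly (pderiv (interp v k (A + int s))) (\<xi> + real s))"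
    by (rule integral_shift_real_ivl[symmetric])
  also have "\<dots> = integral {real J - 1 .. real J}
        (\<lambda>\<xi>. (real n - \<xi>) powr (- \<alpha>) * poly (pderiv (interp (\<lambda>l. v (l + int s)) k A)) \<xi>)"
    using interp_shift_pderiv[of v k A "int s"] by simp
  also have "\<dots> = Iint \<alpha> k i n J (\<lambda>l. v (l + int s))"
    unfolding Iint_def p2 ..
  finally show ?thesis .
qed

lemma translation:
  assumes ik: "1 \<le> i" "i \<le> k" and jn: "k \<le> j" "j \<le> n"
  shows "Dki \<alpha> k i n (dlt j) = omega \<alpha> k i (n - j)"
proof -
  define s where "s = j - k"
  define n' where "n' = k + (n - j)"
  have n_eq: "n = n' + s" and j_eq: "j = k + s" using jn unfolding s_def n'_def by auto
  have shiftd: "(\<lambda>l. dlt j (l + int s)) = dlt k"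
    unfolding dlt_def j_eq by auto
  have k1: "1 \<le> k" using ik by simp
  have split: "(\<Sum>J=1..n. Iint \<alpha> k i n J (dlt j)) =
        (\<Sum>J=1..s. Iint \<alpha> k i n J (dlt j)) + (\<Sum>J=s+1..s+n'. Iint \<alpha> k i n J (dlt j))"
    unfolding n_eq by (subst add.commute, rule sum.ub_add_nat) simp
  have z1: "(\<Sum>J=1..s. Iint \<alpha> k i n J (dlt j)) = 0"
  proof (intro sum.neutral ballI Iint_zero piece_zero_below[OF k1 ik(2) jn(1) _ jn(2)])
    fix J assume "J \<in> {1..s}"
    then show "int J + int i - 1 < int j"
      using ik jn unfolding s_def by auto
  qed
  have "(\<Sum>J=s+1..s+n'. Iint \<alpha> k i n J (dlt j)) = (\<Sum>J=1+s..n'+s. Iint \<alpha> k i n J (dlt j))"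
    by (simp add: add.commute)
  also have "\<dots> = (\<Sum>J=1..n'. Iint \<alpha> k i n (J + s) (dlt j))"
    by (rule sum.shift_bounds_cl_nat_ivl)
  also have "\<dots> = (\<Sum>J=1..n'. Iint \<alpha> k i n' J (dlt k))"
  proof (intro sum.cong refl)
    fix J assume J: "J \<in> {1..n'}"
    show "Iint \<alpha> k i n (J + s) (dlt j) = Iint \<alpha> k i n' J (dlt k)"
    proof (cases "int J \<le> int k - int i")
      case False
      then show ?thesis using Iint_shift[OF False, of \<alpha> n' s "dlt j"] shiftd n_eq by simp
    next
      case True
      have a: "piece k i n' J (dlt k) = 0"
        using True by (intro piece_delta_zero[OF k1]) auto
      have b: "piece k i n (J + s) (dlt j) = 0"
        using True ik jn J unfolding j_eq
        by (intro piece_zero_below[OF k1 ik(2)]) auto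
      show ?thesis using Iint_zero[OF a] Iint_zero[OF b] by simp
    qed
  qed
  finally have "(\<Sum>J=1..n. Iint \<alpha> k i n J (dlt j)) = (\<Sum>J=1..n'. Iint \<alpha> k i n' J (dlt k))"
    using split z1 by simp
  then show ?thesis unfolding Dki_Iint omega_Dki n'_def by simp
qed

lemma pderiv_sum': "pderiv (\<Sum>j\<in>S. f j) = (\<Sum>j\<in>S. pderiv (f j))"
  by (induction S rule: infinite_finite_induct) (simp_all add: pderiv_add)

lemma piece_sum:
  assumes "finite S"
  shows "piece k i n J (\<lambda>l. \<Sum>j\<in>S. w j l) = (\<Sum>j\<in>S. piece k i n J (w j))"
  unfolding piece_def pjq_def using interp_sum_fun[OF assms] by simp

lemma Dki_sum:
  assumes "0 < \<alpha>" "\<alpha> < 1" "finite S"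
  shows "Dki \<alpha> k i n (\<lambda>l. \<Sum>j\<in>S. w j l) = (\<Sum>j\<in>S. Dki \<alpha> k i n (w j))"
proof -
  have "Iint \<alpha> k i n J (\<lambda>l. \<Sum>j\<in>S. w j l) = (\<Sum>j\<in>S. Iint \<alpha> k i n J (w j))" if J: "J \<in> {1..n}" for J
  proof -
    have "Iint \<alpha> k i n J (\<lambda>l. \<Sum>j\<in>S. w j l) = integral {real J - 1 .. real J}
        (\<lambda>\<xi>. \<Sum>j\<in>S. (real n - \<xi>) powr (- \<alpha>) * poly (pderiv (piece k i n J (w j))) \<xi>)"
      unfolding Iint_def piece_sum[OF assms(3)] pderiv_sum' poly_sum sum_distrib_left ..
    also have "\<dots> = (\<Sum>j\<in>S. Iint \<alpha> k i n J (w j))"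
      unfolding Iint_def using J
      by (intro integral_sum assms(3) powr_poly_integrable assms(1,2)) auto
    finally show ?thesis .
  qed
  then have "(\<Sum>J=1..n. Iint \<alpha> k i n J (\<lambda>l. \<Sum>j\<in>S. w j l)) = (\<Sum>J=1..n. \<Sum>j\<in>S. Iint \<alpha> k i n J (w j))"
    by (rule sum.cong[OF refl])
  also have "\<dots> = (\<Sum>j\<in>S. \<Sum>J=1..n. Iint \<alpha> k i n J (w j))" by (rule sum.swap)
  finally show ?thesis unfolding Dki_Iint by (simp add: sum_distrib_left)
qed

definition Wn :: "nat \<Rightarrow> nat \<Rightarrow> int \<Rightarrow> real" where
  "Wn k n = (\<lambda>l. \<Sum>j=k..n. dlt j l)"

lemma Wn_eq: "Wn k n l = (if int k \<le> l \<and> l \<le> int n then 1 else 0)"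
proof (cases "int k \<le> l \<and> l \<le> int n")
  case True
  then have "Wn k n l = (\<Sum>j=k..n. if j = nat l then 1 else 0)"
    unfolding Wn_def dlt_def by (intro sum.cong) auto
  also have "\<dots> = 1"
  proof -
    have "nat l \<in> {k..n}" using True by auto
    then show ?thesis by (simp add: sum.delta)
  qed
  finally show ?thesis using True by simp
next
  case False
  then have "Wn k n l = 0" unfolding Wn_def dlt_def by (intro sum.neutral) auto
  then show ?thesis using False by simp
qed

lemma phi_Dki:
  assumes "0 < \<alpha>" "\<alpha> < 1" "1 \<le> i" "i \<le> k"
  shows "phi \<alpha> k i M = Dki \<alpha> k i (k + M) (Wn k (k + M))"
proof -
  have "phi \<alpha> k i M = (\<Sum>m=0..M. Dki \<alpha> k i (k + M) (dlt (k + M - m)))"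
    unfolding phi_def using translation[OF assms(3,4)] by (intro sum.cong) auto
  also have "\<dots> = (\<Sum>j=k..k+M. Dki \<alpha> k i (k + M) (dlt j))"
    by (rule sum.reindex_bij_witness[where i="\<lambda>j. k + M - j" and j="\<lambda>m. k + M - m"]) auto
  also have "\<dots> = Dki \<alpha> k i (k + M) (Wn k (k + M))"
    unfolding Wn_def by (rule Dki_sum[OF assms(1,2), symmetric]) simp
  finally show ?thesis .
qed

lemma int_tendsto0:
  fixes c \<alpha> :: real
  assumes "0 < \<alpha>" "\<alpha> < 1"
  shows "(\<lambda>n. integral {c - 1 .. c} (\<lambda>\<xi>. (real n - \<xi>) powr (- \<alpha>) * poly p \<xi>)) \<longlonglongrightarrow> 0"
proof -
  have "bounded (poly p ` {c-1..c})"
    by (intro compact_imp_bounded compact_continuous_image) (auto intro: continuous_intros)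
  then obtain B where B: "\<And>\<xi>. \<xi> \<in> {c-1..c} \<Longrightarrow> \<bar>poly p \<xi>\<bar> \<le> B"
    unfolding bounded_iff by (auto simp del: atLeastAtMost_iff)
  have B0: "0 \<le> B" using B[of c] by simp
  have ev: "eventually (\<lambda>n. norm (integral {c - 1 .. c} (\<lambda>\<xi>. (real n - \<xi>) powr (- \<alpha>) * poly p \<xi>))
          \<le> (real n - c) powr (- \<alpha>) * B) sequentially"
  proof (rule eventually_mono[OF eventually_ge_at_top[of "nat (ceiling (c + 1))"]])
    fix n assume n: "nat (ceiling (c + 1)) \<le> n"
    then have nc: "real n \<ge> c + 1" by linarith
    have "norm (integral {c - 1 .. c} (\<lambda>\<xi>. (real n - \<xi>) powr (- \<alpha>) * poly p \<xi>))
        \<le> (real n - c) powr (- \<alpha>) * B * (c - (c - 1))"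
    proof (rule integral_bound)
      show "continuous_on {c - 1..c} (\<lambda>\<xi>. (real n - \<xi>) powr - \<alpha> * poly p \<xi>)"
        using nc by (intro continuous_intros) auto
      fix \<xi> assume \<xi>': "\<xi> \<in> {c-1..c}"
      have "(real n - \<xi>) powr (- \<alpha>) \<le> (real n - c) powr (- \<alpha>)"
        using \<xi>' nc assms by (intro powr_mono2') auto
      then show "norm ((real n - \<xi>) powr (- \<alpha>) * poly p \<xi>) \<le> (real n - c) powr (- \<alpha>) * B"
        using B[OF \<xi>'] by (simp add: abs_mult mult_mono)
    qed simp
    then show "norm (integral {c - 1 .. c} (\<lambda>\<xi>. (real n - \<xi>) powr (- \<alpha>) * poly p \<xi>))
          \<le> (real n - c) powr (- \<alpha>) * B" by simp
  qed
  have "(\<lambda>n. (real n - c) powr (- \<alpha>) * B) \<longlonglongrightarrow> 0"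
    using assms by real_asymp
  then show ?thesis using Lim_null_comparison[OF ev] by blast
qed

definition Winf :: "nat \<Rightarrow> int \<Rightarrow> real" where
  "Winf k = (\<lambda>l. if int k \<le> l then 1 else 0)"

lemma piece_W_low:
  assumes "1 \<le> i" "i \<le> k" "3 * k \<le> n" "J \<le> 2 * k"
  shows "piece k i n J (Wn k n) = piece k i (3 * k) J (Winf k)"
proof -
  have c2: "int J \<le> int n - int i + 1" "int J \<le> int (3 * k) - int i + 1" using assms by auto
  show ?thesis
  proof (cases "int J \<le> int k - int i")
    case True
    then show ?thesis unfolding piece_def pjq_def using assms
      by (auto intro!: interp_cong simp: Wn_eq Winf_def)
  next
    case False
    then show ?thesis unfolding piece_def pjq_def using assms c2
      by (auto intro!: interp_cong simp: Wn_eq Winf_def)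
  qed
qed

lemma piece_W_high:
  assumes "1 \<le> i" "i \<le> k" "3 * k \<le> n" "2 * k < J" "J \<le> n"
  shows "piece k i n J (Wn k n) = [:1:]"
proof -
  have c1: "\<not> int J \<le> int k - int i" using assms by auto
  show ?thesis
  proof (cases "int J \<le> int n - int i + 1")
    case True
    then show ?thesis unfolding piece_def pjq_def using assms c1
      by (auto intro!: interp_const simp: Wn_eq)
  next
    case False
    then show ?thesis unfolding piece_def pjq_def using assms c1
      by (auto intro!: interp_const simp: Wn_eq)
  qed
qed

lemma Dki_W_eq:
  assumes "1 \<le> i" "i \<le> k" "3 * k \<le> n"
  shows "(\<Sum>J=1..n. Iint \<alpha> k i n J (Wn k n)) = (\<Sum>J=1..2*k. integral {real J - 1 .. real J}
        (\<lambda>\<xi>. (real n - \<xi>) powr (- \<alpha>) * poly (pderiv (piece k i (3 * k) J (Winf k))) \<xi>))"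
proof -
  have n_eq: "n = 2 * k + (n - 2 * k)" using assms by simp
  have "(\<Sum>J=1..n. Iint \<alpha> k i n J (Wn k n)) =
     (\<Sum>J=1..2*k. Iint \<alpha> k i n J (Wn k n)) + (\<Sum>J=2*k+1..2*k+(n-2*k). Iint \<alpha> k i n J (Wn k n))"
    by (subst n_eq, rule sum.ub_add_nat) simp
  also have "(\<Sum>J=2*k+1..2*k+(n-2*k). Iint \<alpha> k i n J (Wn k n)) = 0"
  proof (intro sum.neutral ballI)
    fix J assume "J \<in> {2*k+1..2*k+(n-2*k)}"
    then have "piece k i n J (Wn k n) = [:1:]" using assms by (intro piece_W_high) auto
    then show "Iint \<alpha> k i n J (Wn k n) = 0" unfolding Iint_def by simp
  qed
  also have "(\<Sum>J=1..2*k. Iint \<alpha> k i n J (Wn k n)) = (\<Sum>J=1..2*k. integral {real J - 1 .. real J}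
        (\<lambda>\<xi>. (real n - \<xi>) powr (- \<alpha>) * poly (pderiv (piece k i (3 * k) J (Winf k))) \<xi>))"
    unfolding Iint_def using assms by (intro sum.cong refl) (simp add: piece_W_low)
  finally show ?thesis by simp
qed

lemma phi_tendsto0:
  assumes "0 < \<alpha>" "\<alpha> < 1" "1 \<le> i" "i \<le> k"
  shows "phi \<alpha> k i \<longlonglongrightarrow> 0"
proof -
  have ev: "eventually (\<lambda>M. (1 / Gamma (1 - \<alpha>)) * (\<Sum>J=1..2*k. integral {real J - 1 .. real J}
        (\<lambda>\<xi>. (real (k + M) - \<xi>) powr (- \<alpha>) * poly (pderiv (piece k i (3 * k) J (Winf k))) \<xi>))
       = phi \<alpha> k i M) sequentially"
  proof (rule eventually_mono[OF eventually_ge_at_top[of "3 * k"]])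
    fix M assume "3 * k \<le> M"
    then show "(1 / Gamma (1 - \<alpha>)) * (\<Sum>J=1..2*k. integral {real J - 1 .. real J}
        (\<lambda>\<xi>. (real (k + M) - \<xi>) powr (- \<alpha>) * poly (pderiv (piece k i (3 * k) J (Winf k))) \<xi>))
       = phi \<alpha> k i M"
      unfolding phi_Dki[OF assms] Dki_Iint using Dki_W_eq[OF assms(3,4), of "k + M" \<alpha>] by simp
  qed
  have lim: "(\<lambda>M. integral {real J - 1 .. real J}
        (\<lambda>\<xi>. (real (k + M) - \<xi>) powr (- \<alpha>) * poly p \<xi>)) \<longlonglongrightarrow> 0" for J p
    using LIMSEQ_ignore_initial_segment[OF int_tendsto0[OF assms(1,2), of "real J" p], of k]
    by (simp add: add.commute)
  have "(\<lambda>M. (1 / Gamma (1 - \<alpha>)) * (\<Sum>J=1..2*k. integral {real J - 1 .. real J}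
        (\<lambda>\<xi>. (real (k + M) - \<xi>) powr (- \<alpha>) * poly (pderiv (piece k i (3 * k) J (Winf k))) \<xi>)))
     \<longlonglongrightarrow> (1 / Gamma (1 - \<alpha>)) * (\<Sum>J=1..2*k. 0)"
    by (intro tendsto_mult tendsto_const tendsto_sum lim)
  then show ?thesis using Lim_transform_eventually[OF _ ev] by simp
qed

lemma omega_sums0:
  assumes "0 < \<alpha>" "\<alpha> < 1" "1 \<le> i" "i \<le> k"
  shows "omega \<alpha> k i sums 0"
proof -
  have "(\<lambda>n. phi \<alpha> k i n) = (\<lambda>n. \<Sum>m<Suc n. omega \<alpha> k i m)"
    unfolding phi_def by (simp add: atLeast0AtMost lessThan_Suc_atMost)
  then have "(\<lambda>n. \<Sum>m<Suc n. omega \<alpha> k i m) \<longlonglongrightarrow> 0" using phi_tendsto0[OF assms] by simp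
  then show ?thesis unfolding sums_def by (rule LIMSEQ_imp_Suc)
qed



lemma powr_mvt:
  fixes a b s :: real
  assumes "0 < a" "a < b"
  shows "\<exists>z. a < z \<and> z < b \<and> a powr (-s) - b powr (-s) = s * (b - a) * z powr (-s - 1)"
proof -
  have "\<exists>z. a < z \<and> z < b \<and> (b powr (-s) - a powr (-s) = (b - a) * ((-s) * z powr (-s - 1)))"
  proof (rule MVT2[OF assms(2)])
    fix y assume "a \<le> y" "y \<le> b"
    then show "DERIV (\<lambda>y. y powr (-s)) y :> (-s) * y powr (-s - 1)"
      using assms by (intro has_real_derivative_powr) auto
  qed
  then show ?thesis by (auto simp: algebra_simps)
qed

lemma powr_diff_bound:
  fixes a b s :: real
  assumes "0 < a" "a \<le> b" "0 \<le> s"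
  shows "\<bar>a powr (-s) - b powr (-s)\<bar> \<le> s * (b - a) * a powr (-s - 1)"
proof (cases "a = b")
  case False
  then have ab: "a < b" using assms by simp
  obtain z where z: "a < z" "z < b" "a powr (-s) - b powr (-s) = s * (b - a) * z powr (-s - 1)"
    using powr_mvt[OF assms(1) ab] by blast
  have "z powr (-s - 1) \<le> a powr (-s - 1)"
    using z assms by (intro powr_mono2') auto
  then have "s * (b - a) * z powr (-s - 1) \<le> s * (b - a) * a powr (-s - 1)"
    using assms ab by (intro mult_left_mono) auto
  moreover have "0 \<le> s * (b - a) * z powr (-s - 1)" using assms ab by simp
  ultimately show ?thesis using z by simp
qed simp

lemma powr_diff_lower:
  fixes a b s :: real
  assumes "0 < a" "a \<le> b" "0 \<le> s"
  shows "s * (b - a) * b powr (-s - 1) \<le> a powr (-s) - b powr (-s)"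
proof (cases "a = b")
  case False
  then have ab: "a < b" using assms by simp
  obtain z where z: "a < z" "z < b" "a powr (-s) - b powr (-s) = s * (b - a) * z powr (-s - 1)"
    using powr_mvt[OF assms(1) ab] by blast
  have "b powr (-s - 1) \<le> z powr (-s - 1)"
    using z assms by (intro powr_mono2') auto
  then have "s * (b - a) * b powr (-s - 1) \<le> s * (b - a) * z powr (-s - 1)"
    using assms ab by (intro mult_left_mono) auto
  then show ?thesis using z by simp
qed simp

lemma taylor2:
  fixes x \<xi> \<alpha> :: real
  assumes "0 < \<alpha>" "0 \<le> \<xi>" "2 * \<xi> \<le> x" "0 < x"
  shows "\<bar>(x - \<xi>) powr (-\<alpha>) - x powr (-\<alpha>) - \<alpha> * \<xi> * x powr (-\<alpha> - 1)\<bar>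
         \<le> \<alpha> * (\<alpha> + 1) * 2 powr (\<alpha> + 2) * x powr (-\<alpha> - 2) * \<xi>\<^sup>2"
proof (cases "\<xi> = 0")
  case True then show ?thesis by simp
next
  case False
  then have h: "0 < \<xi>" using assms by simp
  define diff where "diff = (\<lambda>(m::nat) (t::real). pochhammer \<alpha> m * (x - t) powr (-\<alpha> - real m))"
  have d: "\<forall>(m::nat) t. m < 2 \<and> 0 \<le> t \<and> t \<le> \<xi> \<longrightarrow> DERIV (diff m) t :> diff (Suc m) t"
  proof (intro allI impI)
    fix m :: nat and t :: real assume mt: "m < 2 \<and> 0 \<le> t \<and> t \<le> \<xi>"
    then have pos: "0 < x - t" using assms h by linarith
    have "((\<lambda>t. (x - t) powr (-\<alpha> - real m)) has_real_derivative
          (-\<alpha> - real m) * (x - t) powr (-\<alpha> - real m - 1) * (-1)) (at t)"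
      by (rule DERIV_fun_powr[of "\<lambda>t. x - t", simplified]) (use pos in \<open>auto intro!: derivative_eq_intros\<close>)
    then have "((\<lambda>t. pochhammer \<alpha> m * (x - t) powr (-\<alpha> - real m)) has_real_derivative
          pochhammer \<alpha> m * ((-\<alpha> - real m) * (x - t) powr (-\<alpha> - real m - 1) * (-1))) (at t)"
      by (rule DERIV_cmult)
    then show "DERIV (diff m) t :> diff (Suc m) t"
      unfolding diff_def by (simp add: pochhammer_Suc algebra_simps)
  qed
  obtain t where t: "0 < t" "t < \<xi>"
    "diff 0 \<xi> = (\<Sum>m<2. diff m 0 / fact m * \<xi> ^ m) + diff 2 t / fact 2 * \<xi> ^ 2"
    using Maclaurin[OF h _ refl d] by auto
  have eq: "(x - \<xi>) powr (-\<alpha>) - x powr (-\<alpha>) - \<alpha> * \<xi> * x powr (-\<alpha> - 1)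
        = \<alpha> * (\<alpha> + 1) * (x - t) powr (-\<alpha> - 2) / 2 * \<xi>\<^sup>2"
    using t(3) unfolding diff_def by (simp add: pochhammer_Suc numeral_2_eq_2 algebra_simps)
  have xt: "x / 2 \<le> x - t" using t assms by linarith
  have "(x - t) powr (-\<alpha> - 2) \<le> (x / 2) powr (-\<alpha> - 2)"
    using xt assms by (intro powr_mono2') auto
  also have "(x / 2) powr (-\<alpha> - 2) = 2 powr (\<alpha> + 2) * x powr (-\<alpha> - 2)"
  proof -
    have e: "2 powr (\<alpha> + 2) * 2 powr (- \<alpha> - 2) = (1::real)" by (simp add: powr_add[symmetric])
    show ?thesis using assms e by (simp add: powr_divide powr_minus_divide powr_minus divide_simps)
  qed
  finally have b: "(x - t) powr (-\<alpha> - 2) \<le> 2 powr (\<alpha> + 2) * x powr (-\<alpha> - 2)" .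
  have "\<alpha> * (\<alpha> + 1) * (x - t) powr (-\<alpha> - 2) / 2 * \<xi>\<^sup>2 \<le> \<alpha> * (\<alpha> + 1) * (2 powr (\<alpha> + 2) * x powr (-\<alpha> - 2)) * \<xi>\<^sup>2"
  proof (intro mult_right_mono)
    have P0: "0 \<le> (x - t) powr (-\<alpha> - 2)" by simp
    have "\<alpha> * (\<alpha> + 1) * (x - t) powr (-\<alpha> - 2) / 2 \<le> \<alpha> * (\<alpha> + 1) * (x - t) powr (-\<alpha> - 2)"
      using P0 assms by (simp add: field_simps)
    also have "\<dots> \<le> \<alpha> * (\<alpha> + 1) * (2 powr (\<alpha> + 2) * x powr (-\<alpha> - 2))"
      using b assms by (intro mult_left_mono) auto
    finally show "\<alpha> * (\<alpha> + 1) * (x - t) powr (-\<alpha> - 2) / 2 \<le> \<alpha> * (\<alpha> + 1) * (2 powr (\<alpha> + 2) * x powr (-\<alpha> - 2))" .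
  qed simp
  moreover have "0 \<le> \<alpha> * (\<alpha> + 1) * (x - t) powr (-\<alpha> - 2) / 2 * \<xi>\<^sup>2" using assms by simp
  ultimately show ?thesis unfolding eq by (simp add: mult.assoc)
qed

lemma poly_bound_ex: "\<exists>B\<ge>0. \<forall>\<xi>\<in>{a..b}. \<bar>poly p \<xi>\<bar> \<le> (B::real)"
proof -
  have "bounded (poly p ` {a..b})"
    by (intro compact_imp_bounded compact_continuous_image) (auto intro: continuous_intros)
  then obtain B where B: "\<forall>\<xi>\<in>{a..b}. \<bar>poly p \<xi>\<bar> \<le> B"
    unfolding bounded_iff by (auto simp del: atLeastAtMost_iff)
  then show ?thesis by (intro exI[of _ "max B 0"]) auto
qed

lemma int_expand:
  fixes c x \<alpha> B :: real
  assumes "0 < \<alpha>" "1 \<le> c" "2 * c \<le> x" and B: "\<forall>\<xi>\<in>{c-1..c}. \<bar>poly p \<xi>\<bar> \<le> B"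
  shows "\<bar>integral {c-1..c} (\<lambda>\<xi>. (x - \<xi>) powr (-\<alpha>) * poly p \<xi>)
          - x powr (-\<alpha>) * integral {c-1..c} (poly p)
          - \<alpha> * x powr (-\<alpha> - 1) * integral {c-1..c} (\<lambda>\<xi>. \<xi> * poly p \<xi>)\<bar>
         \<le> \<alpha> * (\<alpha> + 1) * 2 powr (\<alpha> + 2) * x powr (-\<alpha> - 2) * c\<^sup>2 * B"
proof -
  have x0: "0 < x" using assms by simp
  have c1: "continuous_on {c-1..c} (\<lambda>\<xi>. (x - \<xi>) powr (-\<alpha>) * poly p \<xi>)"
    using assms by (intro continuous_intros) auto
  have i1: "(\<lambda>\<xi>. (x - \<xi>) powr (-\<alpha>) * poly p \<xi>) integrable_on {c-1..c}"
    by (rule integrable_continuous_real[OF c1])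
  have i2: "poly p integrable_on {c-1..c}"
    by (rule integrable_continuous_real) (auto intro: continuous_intros)
  have i3: "(\<lambda>\<xi>. \<xi> * poly p \<xi>) integrable_on {c-1..c}"
    by (rule integrable_continuous_real, intro continuous_on_mult continuous_on_id) (auto intro: continuous_intros)
  define E where "E = (\<lambda>\<xi>. ((x - \<xi>) powr (-\<alpha>) - x powr (-\<alpha>) - \<alpha> * \<xi> * x powr (-\<alpha> - 1)) * poly p \<xi>)"
  have "integral {c-1..c} E = integral {c-1..c} (\<lambda>\<xi>. (x - \<xi>) powr (-\<alpha>) * poly p \<xi>
        - x powr (-\<alpha>) * poly p \<xi> - \<alpha> * x powr (-\<alpha> - 1) * (\<xi> * poly p \<xi>))"
    unfolding E_def by (intro integral_cong) (simp add: algebra_simps)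
  also have "\<dots> = integral {c-1..c} (\<lambda>\<xi>. (x - \<xi>) powr (-\<alpha>) * poly p \<xi>)
          - x powr (-\<alpha>) * integral {c-1..c} (poly p)
          - \<alpha> * x powr (-\<alpha> - 1) * integral {c-1..c} (\<lambda>\<xi>. \<xi> * poly p \<xi>)"
  proof -
    have j2: "(\<lambda>\<xi>. x powr (-\<alpha>) * poly p \<xi>) integrable_on {c-1..c}"
      using i2 by (rule integrable_on_mult_right)
    have j3: "(\<lambda>\<xi>. \<alpha> * x powr (-\<alpha> - 1) * (\<xi> * poly p \<xi>)) integrable_on {c-1..c}"
      using i3 by (rule integrable_on_mult_right)
    have j12: "(\<lambda>\<xi>. (x - \<xi>) powr (-\<alpha>) * poly p \<xi> - x powr (-\<alpha>) * poly p \<xi>) integrable_on {c-1..c}"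
      using i1 j2 by (rule integrable_diff)
    show ?thesis
      using integral_diff[OF j12 j3] integral_diff[OF i1 j2] integral_mult_right by simp
  qed
  finally have eqE: "\<dots> = integral {c-1..c} E" ..
  have "norm (integral {c-1..c} E) \<le> (\<alpha> * (\<alpha> + 1) * 2 powr (\<alpha> + 2) * x powr (-\<alpha> - 2) * c\<^sup>2 * B) * (c - (c - 1))"
  proof (rule integral_bound)
    show "continuous_on {c-1..c} E" unfolding E_def
      using assms by (intro continuous_intros) auto
    fix \<xi> assume \<xi>: "\<xi> \<in> {c-1..c}"
    have t: "\<bar>(x - \<xi>) powr (-\<alpha>) - x powr (-\<alpha>) - \<alpha> * \<xi> * x powr (-\<alpha> - 1)\<bar>
         \<le> \<alpha> * (\<alpha> + 1) * 2 powr (\<alpha> + 2) * x powr (-\<alpha> - 2) * \<xi>\<^sup>2"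
      using \<xi> assms by (intro taylor2) auto
    also have "\<dots> \<le> \<alpha> * (\<alpha> + 1) * 2 powr (\<alpha> + 2) * x powr (-\<alpha> - 2) * c\<^sup>2"
      using \<xi> assms by (intro mult_left_mono power_mono) auto
    finally have t': "\<bar>(x - \<xi>) powr (-\<alpha>) - x powr (-\<alpha>) - \<alpha> * \<xi> * x powr (-\<alpha> - 1)\<bar>
         \<le> \<alpha> * (\<alpha> + 1) * 2 powr (\<alpha> + 2) * x powr (-\<alpha> - 2) * c\<^sup>2" .
    show "norm (E \<xi>) \<le> \<alpha> * (\<alpha> + 1) * 2 powr (\<alpha> + 2) * x powr (-\<alpha> - 2) * c\<^sup>2 * B"
      unfolding E_def real_norm_def abs_mult
      by (rule mult_mono[OF t' B[rule_format, OF \<xi>]]) (use assms in auto)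
  qed simp
  then show ?thesis unfolding eqE by simp
qed

lemma int_pderiv:
  fixes a b :: real
  assumes "a \<le> b"
  shows "integral {a..b} (poly (pderiv P)) = poly P b - poly P a"
proof -
  have "(poly (pderiv P) has_integral (poly P b - poly P a)) {a..b}"
    using assms
    by (intro fundamental_theorem_of_calculus)
       (auto simp: has_real_derivative_iff_has_vector_derivative[symmetric] intro: DERIV_subset[OF poly_DERIV])
  then show ?thesis by (rule integral_unique)
qed

lemma telesc: "(\<Sum>J=1..(N::nat). f J - f (J - 1)) = f N - (f 0 :: real)"
  by (induction N) (simp_all add: sum.cl_ivl_Suc)

definition PD :: "nat \<Rightarrow> nat \<Rightarrow> nat \<Rightarrow> real poly" where
  "PD k i J = piece k i (3 * k) J (dlt k)"

lemma piece_dlt_low: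
  assumes "1 \<le> i" "i \<le> k" "3 * k \<le> n" "J \<le> 2 * k"
  shows "piece k i n J (dlt k) = PD k i J"
proof -
  have c2: "int J \<le> int n - int i + 1" "int J \<le> int (3 * k) - int i + 1" using assms by auto
  then show ?thesis unfolding PD_def piece_def by auto
qed

lemma piece_dlt_high:
  assumes "1 \<le> i" "i \<le> k" "3 * k \<le> n" "2 * k < J"
  shows "piece k i n J (dlt k) = 0"
proof -
  have c1: "\<not> int J \<le> int k - int i" using assms by auto
  show ?thesis
  proof (cases "int J \<le> int n - int i + 1")
    case True
    then show ?thesis unfolding piece_def pjq_def using assms c1
      by (auto intro!: interp_zero simp: dlt_def)
  next
    case False
    then show ?thesis unfolding piece_def pjq_def using assms c1
      by (auto intro!: interp_zero simp: dlt_def)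
  qed
qed

lemma omega_repr:
  assumes "1 \<le> i" "i \<le> k" "3 * k \<le> m"
  shows "omega \<alpha> k i m = (1 / Gamma (1 - \<alpha>)) * (\<Sum>J=1..2*k. integral {real J - 1 .. real J}
        (\<lambda>\<xi>. (real (k + m) - \<xi>) powr (- \<alpha>) * poly (pderiv (PD k i J)) \<xi>))"
proof -
  define n where "n = k + m"
  have n_eq: "n = 2 * k + (n - 2 * k)" using assms unfolding n_def by simp
  have "(\<Sum>J=1..n. Iint \<alpha> k i n J (dlt k)) =
     (\<Sum>J=1..2*k. Iint \<alpha> k i n J (dlt k)) + (\<Sum>J=2*k+1..2*k+(n-2*k). Iint \<alpha> k i n J (dlt k))"
    by (subst n_eq, rule sum.ub_add_nat) simp
  also have "(\<Sum>J=2*k+1..2*k+(n-2*k). Iint \<alpha> k i n J (dlt k)) = 0"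
  proof (intro sum.neutral ballI)
    fix J assume "J \<in> {2*k+1..2*k+(n-2*k)}"
    then have "piece k i n J (dlt k) = 0" using assms unfolding n_def by (intro piece_dlt_high) auto
    then show "Iint \<alpha> k i n J (dlt k) = 0" by (rule Iint_zero)
  qed
  also have "(\<Sum>J=1..2*k. Iint \<alpha> k i n J (dlt k)) = (\<Sum>J=1..2*k. integral {real J - 1 .. real J}
        (\<lambda>\<xi>. (real n - \<xi>) powr (- \<alpha>) * poly (pderiv (PD k i J)) \<xi>))"
    unfolding Iint_def using assms unfolding n_def by (intro sum.cong refl) (simp add: piece_dlt_low)
  finally show ?thesis unfolding omega_Dki Dki_Iint n_def by simp
qed

lemma PD_values:
  assumes "1 \<le> i" "i \<le> k" "1 \<le> J" "J \<le> 2 * k"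
  shows "poly (PD k i J) (real J) = dlt k (int J)"
    and "poly (PD k i J) (real J - 1) = dlt k (int J - 1)"
proof -
  have "poly (PD k i J) (real J) = dlt k (int J) \<and> poly (PD k i J) (real J - 1) = dlt k (int J - 1)"
  proof (cases "int J \<le> int k - int i")
    case True
    then have "PD k i J = interp (dlt k) (k - 1) (int J + (int k - int J) - int (k - 1) - 1)"
      unfolding PD_def piece_def pjq_def by simp
    also have "\<dots> = 0" using assms by (intro interp_zero) (auto simp: dlt_def)
    finally show ?thesis using True assms by (simp add: dlt_def)
  next
    case False
    define a where "a = int J + int i - int k - 1"
    have c2: "int J \<le> int (3 * k) - int i + 1" using assms by auto
    have P: "PD k i J = interp (dlt k) k a"
      using False c2 unfolding PD_def piece_def pjq_def a_def by simp
    have r1: "a + int (k - i + 1) = int J" and r2: "a + int (k - i) = int J - 1"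
      using assms unfolding a_def by auto
    have "poly (interp (dlt k) k a) (real_of_int (a + int (k - i + 1))) = dlt k (a + int (k - i + 1))"
      by (rule interp_node) (use assms in auto)
    moreover have "poly (interp (dlt k) k a) (real_of_int (a + int (k - i))) = dlt k (a + int (k - i))"
      by (rule interp_node) (use assms in auto)
    ultimately show ?thesis unfolding P r1 r2 by simp
  qed
  then show "poly (PD k i J) (real J) = dlt k (int J)" "poly (PD k i J) (real J - 1) = dlt k (int J - 1)"
    by auto
qed

lemma M0_zero:
  assumes "1 \<le> i" "i \<le> k"
  shows "(\<Sum>J=1..2*k. integral {real J - 1 .. real J} (poly (pderiv (PD k i J)))) = 0"
proof -
  have "(\<Sum>J=1..2*k. integral {real J - 1 .. real J} (poly (pderiv (PD k i J)))) =
        (\<Sum>J=1..2*k. dlt k (int J) - dlt k (int (J - 1)))"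
  proof (intro sum.cong refl)
    fix J assume J: "J \<in> {1..2*k}"
    then have "int (J - 1) = int J - 1" by auto
    then show "integral {real J - 1 .. real J} (poly (pderiv (PD k i J))) = dlt k (int J) - dlt k (int (J - 1))"
      using J assms by (simp add: int_pderiv PD_values)
  qed
  also have "\<dots> = dlt k (int (2 * k)) - dlt k (int 0)"
    by (rule telesc[where f = "\<lambda>J. dlt k (int J)"])
  also have "\<dots> = 0" using assms by (simp add: dlt_def)
  finally show ?thesis .
qed

lemma omega_asym:
  assumes "0 < \<alpha>" "\<alpha> < 1" "1 \<le> i" "i \<le> k"
  shows "\<exists>A C. \<forall>m\<ge>3*k. \<bar>omega \<alpha> k i m - A * real (k + m) powr (-\<alpha> - 1)\<bar> \<le> C * real (k + m) powr (-\<alpha> - 2)"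
proof -
  define q where "q = (\<lambda>J. poly (pderiv (PD k i J)))"
  have "\<forall>J. \<exists>B\<ge>0. \<forall>\<xi>\<in>{real J - 1..real J}. \<bar>q J \<xi>\<bar> \<le> B"
    unfolding q_def using poly_bound_ex by blast
  then obtain B where B: "\<And>J. B J \<ge> 0" "\<And>J. \<forall>\<xi>\<in>{real J - 1..real J}. \<bar>q J \<xi>\<bar> \<le> B J"
    by metis
  define G where "G = Gamma (1 - \<alpha>)"
  define K where "K = \<alpha> * (\<alpha> + 1) * 2 powr (\<alpha> + 2)"
  define I1 where "I1 = (\<lambda>J. integral {real J - 1 .. real J} (q J))"
  define I2 where "I2 = (\<lambda>J. integral {real J - 1 .. real J} (\<lambda>\<xi>. \<xi> * q J \<xi>))"
  define A where "A = (1 / G) * (\<alpha> * (\<Sum>J=1..2*k. I2 J))"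
  define C where "C = \<bar>1 / G\<bar> * (\<Sum>J=1..2*k. K * (real J)\<^sup>2 * B J)"
  have sI1: "(\<Sum>J=1..2*k. I1 J) = 0"
    unfolding I1_def q_def using M0_zero[OF assms(3,4)] .
  show ?thesis
  proof (intro exI allI impI)
    fix m assume m: "3 * k \<le> m"
    define x where "x = real (k + m)"
    define T where "T = (\<lambda>J. integral {real J - 1 .. real J} (\<lambda>\<xi>. (x - \<xi>) powr (- \<alpha>) * q J \<xi>))"
    define R where "R = (\<lambda>J. T J - x powr (-\<alpha>) * I1 J - \<alpha> * x powr (-\<alpha> - 1) * I2 J)"
    have om: "omega \<alpha> k i m = (1 / G) * (\<Sum>J=1..2*k. T J)"
      unfolding omega_repr[OF assms(3,4) m] G_def T_def q_def x_def ..
    have Rb: "\<bar>R J\<bar> \<le> K * (real J)\<^sup>2 * B J * x powr (-\<alpha> - 2)" if J: "J \<in> {1..2*k}" for J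
    proof -
      have "\<bar>R J\<bar> \<le> \<alpha> * (\<alpha> + 1) * 2 powr (\<alpha> + 2) * x powr (-\<alpha> - 2) * (real J)\<^sup>2 * B J"
        unfolding R_def T_def I1_def I2_def q_def
        using int_expand[OF assms(1), of "real J" x "pderiv (PD k i J)" "B J"] B(2)[of J] J m
        unfolding q_def x_def by auto
      then show ?thesis unfolding K_def by (simp add: algebra_simps)
    qed
    have sumT: "(\<Sum>J=1..2*k. T J) = (\<Sum>J=1..2*k. R J) + x powr (-\<alpha>) * (\<Sum>J=1..2*k. I1 J)
         + \<alpha> * x powr (-\<alpha> - 1) * (\<Sum>J=1..2*k. I2 J)"
      unfolding R_def by (simp add: sum.distrib sum_subtractf sum_distrib_left)
    have "omega \<alpha> k i m - A * x powr (-\<alpha> - 1) = (1 / G) * (\<Sum>J=1..2*k. R J)"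
      unfolding om sumT sI1 A_def by (simp add: algebra_simps)
    also have "\<bar>\<dots>\<bar> \<le> \<bar>1 / G\<bar> * (\<Sum>J=1..2*k. K * (real J)\<^sup>2 * B J * x powr (-\<alpha> - 2))"
      unfolding abs_mult by (intro mult_left_mono order.trans[OF sum_abs] sum_mono Rb) auto
    also have "\<dots> = C * x powr (-\<alpha> - 2)"
      unfolding C_def by (simp add: sum_distrib_right mult.assoc)
    finally show "\<bar>omega \<alpha> k i m - A * real (k + m) powr (-\<alpha> - 1)\<bar> \<le> C * real (k + m) powr (-\<alpha> - 2)"
      unfolding x_def .
  qed
qed



lemma gcoef_poch: "gcoef \<beta> n = pochhammer (-\<beta>) n / fact n"
  unfolding gcoef_def gbinomial_pochhammer
  by (simp add: mult.assoc[symmetric] power_mult_distrib[symmetric])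

lemma gcoef_Suc: "gcoef \<beta> (Suc n) = gcoef \<beta> n * (real n - \<beta>) / (real n + 1)"
  unfolding gcoef_poch by (simp add: pochhammer_Suc field_simps)

lemma minus_alpha_not_nonpos_Int:
  fixes \<alpha> :: real
  assumes "0 < \<alpha>" "\<alpha> < 1"
  shows "-\<alpha> \<notin> \<int>\<^sub>\<le>\<^sub>0"
proof
  assume "-\<alpha> \<in> \<int>\<^sub>\<le>\<^sub>0"
  then obtain n :: int where n: "-\<alpha> = of_int n" "n \<le> 0" by (auto simp: nonpos_Ints_def)
  show False
  proof (cases "n = 0")
    case True then show False using n assms by (simp add: True)
  next
    case False
    then have "n \<le> -1" using n by simp
    then have "real_of_int n \<le> -1" by linarith
    then show False using n assms by simp
  qed
qed

definition bseq :: "real \<Rightarrow> nat \<Rightarrow> real" where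
  "bseq \<alpha> n = gcoef \<alpha> n * (real n - \<alpha>) * real n powr \<alpha>"

lemma bseq_rGamma:
  assumes "1 \<le> n"
  shows "rGamma_series (-\<alpha>) n = bseq \<alpha> n"
proof -
  have n0: "0 < real n" using assms by simp
  have e: "exp (- (\<alpha> * ln (real n))) = real n powr (-\<alpha>)"
    using n0 assms by (simp add: powr_def)
  have e2: "real n powr \<alpha> * exp (- (\<alpha> * ln (real n))) = 1"
    unfolding e using n0 by (simp add: powr_add[symmetric])
  show ?thesis
    unfolding rGamma_series_def bseq_def gcoef_poch
    using assms e2 by (simp add: pochhammer_Suc field_simps)
qed

lemma bseq_lim:
  assumes "0 < \<alpha>" "\<alpha> < 1"
  shows "bseq \<alpha> \<longlonglongrightarrow> rGamma (-\<alpha>)" and "rGamma (-\<alpha>) \<noteq> 0"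
proof -
  have "eventually (\<lambda>n. rGamma_series (-\<alpha>) n = bseq \<alpha> n) sequentially"
    using eventually_ge_at_top[of 1] by eventually_elim (rule bseq_rGamma)
  then show "bseq \<alpha> \<longlonglongrightarrow> rGamma (-\<alpha>)"
    using rGamma_series_LIMSEQ[of "-\<alpha>"] Lim_transform_eventually by blast
  show "rGamma (-\<alpha>) \<noteq> 0" by (rule rGamma_nonzero[OF minus_alpha_not_nonpos_Int[OF assms]])
qed

lemma bseq_Suc:
  assumes "1 \<le> n"
  shows "bseq \<alpha> (Suc n) = bseq \<alpha> n * ((real n + 1 - \<alpha>) / (real n + 1)) * ((real n + 1) / real n) powr \<alpha>"
proof -
  have p: "real n powr \<alpha> > 0" using assms by simp
  have "bseq \<alpha> n * ((real n + 1 - \<alpha>) / (real n + 1)) * ((real n + 1) / real n) powr \<alpha>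
     = gcoef \<alpha> n * (real n - \<alpha>) * ((real n + 1 - \<alpha>) / (real n + 1)) * (real n + 1) powr \<alpha> * (real n powr \<alpha> / real n powr \<alpha>)"
    unfolding bseq_def powr_divide by (simp add: algebra_simps)
  also have "\<dots> = gcoef \<alpha> n * (real n - \<alpha>) * ((real n + 1 - \<alpha>) / (real n + 1)) * (real n + 1) powr \<alpha>"
    using p by simp
  also have "\<dots> = bseq \<alpha> (Suc n)"
    unfolding bseq_def gcoef_Suc by (simp add: field_simps)
  finally show ?thesis ..
qed

lemma rho_bound:
  fixes \<alpha> :: real
  assumes "0 < \<alpha>" "\<alpha> < 1" "1 \<le> n"
  shows "\<bar>((real n + 1 - \<alpha>) / (real n + 1)) * ((real n + 1) / real n) powr \<alpha> - 1\<bar>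
         \<le> (1 + \<alpha> * (\<alpha> + 1) * 2 powr (\<alpha> + 2)) / (real n + 1)\<^sup>2"
proof -
  define u where "u = 1 / (real n + 1)"
  have u: "0 \<le> u" "2 * u \<le> 1" using assms unfolding u_def by (auto simp: field_simps)
  have eq1: "(real n + 1) / real n = 1 / (1 - u)"
    using assms unfolding u_def by (simp add: field_simps)
  have eq2: "(real n + 1 - \<alpha>) / (real n + 1) = 1 - \<alpha> * u"
    using assms unfolding u_def by (simp add: field_simps)
  have pw: "((real n + 1) / real n) powr \<alpha> = (1 - u) powr (-\<alpha>)"
    unfolding eq1 powr_divide using u by (simp add: powr_minus_divide)
  define E where "E = (1 - u) powr (-\<alpha>) - 1 - \<alpha> * u"
  have Eb: "\<bar>E\<bar> \<le> \<alpha> * (\<alpha> + 1) * 2 powr (\<alpha> + 2) * u\<^sup>2"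
    using taylor2[OF assms(1) u(1), of 1] u unfolding E_def by simp
  have "(1 - \<alpha> * u) * (1 - u) powr (-\<alpha>) - 1 = - (\<alpha> * u)\<^sup>2 + (1 - \<alpha> * u) * E"
    unfolding E_def by (simp add: algebra_simps power2_eq_square)
  moreover have "\<bar>- (\<alpha> * u)\<^sup>2 + (1 - \<alpha> * u) * E\<bar> \<le> u\<^sup>2 + \<alpha> * (\<alpha> + 1) * 2 powr (\<alpha> + 2) * u\<^sup>2"
  proof -
    have "\<alpha>\<^sup>2 \<le> 1" using assms by (simp add: power_le_one)
    then have "\<alpha>\<^sup>2 * u\<^sup>2 \<le> 1 * u\<^sup>2" by (intro mult_right_mono) auto
    then have a1: "(\<alpha> * u)\<^sup>2 \<le> u\<^sup>2" by (simp add: power_mult_distrib)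
    have a2: "\<bar>1 - \<alpha> * u\<bar> \<le> 1" using assms u by (auto simp: abs_le_iff mult_le_one)
    have "\<bar>(1 - \<alpha> * u) * E\<bar> \<le> 1 * (\<alpha> * (\<alpha> + 1) * 2 powr (\<alpha> + 2) * u\<^sup>2)"
      unfolding abs_mult by (rule mult_mono[OF a2 Eb]) auto
    then have b1: "(1 - \<alpha> * u) * E \<le> \<alpha> * (\<alpha> + 1) * 2 powr (\<alpha> + 2) * u\<^sup>2"
      and b2: "- ((1 - \<alpha> * u) * E) \<le> \<alpha> * (\<alpha> + 1) * 2 powr (\<alpha> + 2) * u\<^sup>2"
      by (simp_all add: abs_le_iff)
    have z: "0 \<le> (\<alpha> * u)\<^sup>2" by (rule zero_le_power2)
    show ?thesis unfolding abs_le_iff using a1 b1 b2 z by linarith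
  qed
  ultimately have fin: "\<bar>(1 - \<alpha> * u) * (1 - u) powr (-\<alpha>) - 1\<bar> \<le> u\<^sup>2 + \<alpha> * (\<alpha> + 1) * 2 powr (\<alpha> + 2) * u\<^sup>2"
    by simp
  have r: "(1 + \<alpha> * (\<alpha> + 1) * 2 powr (\<alpha> + 2)) / (real n + 1)\<^sup>2 = u\<^sup>2 + \<alpha> * (\<alpha> + 1) * 2 powr (\<alpha> + 2) * u\<^sup>2"
    unfolding u_def by (simp add: power_divide field_simps)
  show ?thesis unfolding eq2 pw r using fin .
qed

lemma bseq_rate:
  fixes \<alpha> :: real
  assumes "0 < \<alpha>" "\<alpha> < 1"
  shows "\<exists>D. \<forall>n\<ge>1. \<bar>bseq \<alpha> n - rGamma (-\<alpha>)\<bar> \<le> D / real n"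
proof -
  define r where "r = rGamma (-\<alpha>)"
  have lim: "bseq \<alpha> \<longlonglongrightarrow> r" unfolding r_def by (rule bseq_lim[OF assms])
  then have "Bseq (bseq \<alpha>)" by (rule convergent_imp_Bseq[OF convergentI])
  then obtain Bb where Bb: "Bb > 0" "\<And>n. \<bar>bseq \<alpha> n\<bar> \<le> Bb" unfolding Bseq_def by auto
  define K where "K = \<alpha> * (\<alpha> + 1) * 2 powr (\<alpha> + 2)"
  define D where "D = Bb * (1 + K)"
  have D0: "0 \<le> D" unfolding D_def K_def using Bb assms by simp
  have inc: "\<bar>bseq \<alpha> (Suc n) - bseq \<alpha> n\<bar> \<le> D / (real n * (real n + 1))" if n: "1 \<le> n" for n
  proof -
    have eqb: "bseq \<alpha> (Suc n) - bseq \<alpha> n = bseq \<alpha> n * (((real n + 1 - \<alpha>) / (real n + 1)) * ((real n + 1) / real n) powr \<alpha> - 1)"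
      unfolding bseq_Suc[OF n] by (simp add: algebra_simps)
    have "\<bar>bseq \<alpha> (Suc n) - bseq \<alpha> n\<bar> \<le> Bb * ((1 + K) / (real n + 1)\<^sup>2)"
      unfolding eqb abs_mult K_def by (rule mult_mono[OF Bb(2) rho_bound[OF assms n]]) (use Bb in auto)
    also have "\<dots> = D / (real n + 1)\<^sup>2" unfolding D_def by simp
    also have "\<dots> \<le> D / (real n * (real n + 1))"
      using n D0 by (intro divide_left_mono) (auto simp: power2_eq_square intro!: mult_pos_pos)
    finally show ?thesis .
  qed
  have key: "D / (real (Suc j) * (real (Suc j) + 1)) = D / real (Suc j) - D / real (Suc (Suc j))" for j
    by (simp add: field_simps)
  define c where "c = (\<lambda>j. bseq \<alpha> (Suc j) + D / real (Suc j))"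
  define d where "d = (\<lambda>j. bseq \<alpha> (Suc j) - D / real (Suc j))"
  have "decseq c"
  proof (rule decseq_SucI)
    fix j
    have "bseq \<alpha> (Suc (Suc j)) - bseq \<alpha> (Suc j) \<le> D / real (Suc j) - D / real (Suc (Suc j))"
      using inc[of "Suc j"] key[of j] by (simp add: abs_le_iff)
    then show "c (Suc j) \<le> c j" unfolding c_def by simp
  qed
  have "incseq d"
  proof (rule incseq_SucI)
    fix j
    have "- (bseq \<alpha> (Suc (Suc j)) - bseq \<alpha> (Suc j)) \<le> D / real (Suc j) - D / real (Suc (Suc j))"
      using inc[of "Suc j"] key[of j] by (simp add: abs_le_iff)
    then show "d j \<le> d (Suc j)" unfolding d_def by simp
  qed
  have l1: "(\<lambda>j. bseq \<alpha> (Suc j)) \<longlonglongrightarrow> r" using lim by (rule LIMSEQ_Suc)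
  have l2: "(\<lambda>j. D / real (Suc j)) \<longlonglongrightarrow> 0"
    by real_asymp
  have cl: "c \<longlonglongrightarrow> r" unfolding c_def using tendsto_add[OF l1 l2] by simp
  have dl: "d \<longlonglongrightarrow> r" unfolding d_def using tendsto_diff[OF l1 l2] by simp
  show ?thesis
  proof (intro exI allI impI)
    fix n :: nat assume n: "1 \<le> n"
    then obtain j where j: "n = Suc j" by (cases n) auto
    have "r \<le> c j" by (rule decseq_ge[OF \<open>decseq c\<close> cl])
    moreover have "d j \<le> r" by (rule incseq_le[OF \<open>incseq d\<close> dl])
    ultimately show "\<bar>bseq \<alpha> n - rGamma (-\<alpha>)\<bar> \<le> D / real n"
      unfolding j c_def d_def r_def by (simp add: abs_le_iff)
  qed
qed

lemma gcoef_asym: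
  fixes \<alpha> :: real
  assumes "0 < \<alpha>" "\<alpha> < 1"
  shows "\<exists>C. \<forall>n\<ge>1. \<bar>gcoef \<alpha> n - rGamma (-\<alpha>) * real n powr (-\<alpha> - 1)\<bar> \<le> C * real n powr (-\<alpha> - 2)"
proof -
  define r where "r = rGamma (-\<alpha>)"
  obtain D where D: "\<And>n. 1 \<le> n \<Longrightarrow> \<bar>bseq \<alpha> n - r\<bar> \<le> D / real n"
    using bseq_rate[OF assms] unfolding r_def by blast
  define C where "C = (D + \<bar>r\<bar> * \<alpha>) / (1 - \<alpha>)"
  show ?thesis
  proof (intro exI allI impI)
    fix n :: nat assume n: "1 \<le> n"
    define N where "N = real n"
    define P where "P = N powr \<alpha>"
    have N1: "1 \<le> N" using n unfolding N_def by simp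
    have P0: "0 < P" unfolding P_def using N1 by simp
    have Na: "0 < N - \<alpha>" using N1 assms by simp
    have p1: "real n powr (-\<alpha> - 1) = 1 / (N * P)"
      unfolding N_def P_def using N1 N_def
      by (simp add: powr_diff powr_minus_divide powr_add field_simps)
    have p2: "real n powr (-\<alpha> - 2) = 1 / (N^2 * P)"
      unfolding N_def P_def using N1 N_def
      by (simp add: powr_diff powr_minus_divide powr_add field_simps power2_eq_square)
    define X where "X = gcoef \<alpha> n"
    have bX: "bseq \<alpha> n = X * (N - \<alpha>) * P" unfolding bseq_def X_def N_def P_def ..
    have eq: "X - r / (N * P) = ((bseq \<alpha> n - r) * N + r * \<alpha>) / ((N - \<alpha>) * N * P)"
      unfolding bX using Na N1 P0 by (simp add: field_simps)
    have num: "\<bar>(bseq \<alpha> n - r) * N + r * \<alpha>\<bar> \<le> D + \<bar>r\<bar> * \<alpha>"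
    proof -
      have "\<bar>(bseq \<alpha> n - r) * N\<bar> \<le> D"
        using D[OF n] N1 unfolding N_def abs_mult by (simp add: field_simps)
      moreover have "\<bar>(bseq \<alpha> n - r) * N + r * \<alpha>\<bar> \<le> \<bar>(bseq \<alpha> n - r) * N\<bar> + \<bar>r * \<alpha>\<bar>"
        by (rule abs_triangle_ineq)
      moreover have "\<bar>r * \<alpha>\<bar> = \<bar>r\<bar> * \<alpha>" using assms by (simp add: abs_mult)
      ultimately show ?thesis by linarith
    qed
    have den: "(1 - \<alpha>) * (N^2 * P) \<le> (N - \<alpha>) * N * P"
    proof -
      have "\<alpha> * 1 \<le> \<alpha> * N" using N1 assms by (intro mult_left_mono) auto
      then have "(1 - \<alpha>) * N \<le> N - \<alpha>" by (simp add: algebra_simps)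
      then have "(1 - \<alpha>) * N * (N * P) \<le> (N - \<alpha>) * (N * P)"
        using N1 P0 by (intro mult_right_mono) auto
      then show ?thesis by (simp add: power2_eq_square algebra_simps)
    qed
    have "\<bar>X - r / (N * P)\<bar> \<le> (D + \<bar>r\<bar> * \<alpha>) / ((1 - \<alpha>) * (N^2 * P))"
      unfolding eq abs_divide
    proof (rule frac_le)
      show "0 \<le> D + \<bar>r\<bar> * \<alpha>" using num by linarith
      show "0 < (1 - \<alpha>) * (N\<^sup>2 * P)" using assms N1 P0 by simp
    qed (use num den Na N1 P0 in auto)
    also have "\<dots> = C * (1 / (N^2 * P))" unfolding C_def by simp
    finally show "\<bar>gcoef \<alpha> n - rGamma (-\<alpha>) * real n powr (-\<alpha> - 1)\<bar> \<le> C * real n powr (-\<alpha> - 2)"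
      unfolding p1 p2 X_def r_def by simp
  qed
qed



lemma powr_mult_self: "0 < (x::real) \<Longrightarrow> x * x powr a = x powr (a + 1)"
  by (simp add: powr_add)

lemma gcoef_partial: "(\<Sum>m\<le>N. gcoef \<beta> m) = gcoef (\<beta> - 1) N"
  unfolding gcoef_def using gbinomial_sum_lower_neg[of \<beta> N] by (simp add: mult.commute)

lemma gcoef_bound:
  fixes \<alpha> :: real
  assumes "0 < \<alpha>" "\<alpha> < 1"
  shows "\<exists>C. \<forall>n\<ge>1. \<bar>gcoef \<alpha> n\<bar> \<le> C * real n powr (-\<alpha> - 1)"
proof -
  obtain C where C: "\<And>n. 1 \<le> n \<Longrightarrow> \<bar>gcoef \<alpha> n - rGamma (-\<alpha>) * real n powr (-\<alpha> - 1)\<bar> \<le> C * real n powr (-\<alpha> - 2)"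
    using gcoef_asym[OF assms] by blast
  show ?thesis
  proof (intro exI allI impI)
    fix n :: nat assume n: "1 \<le> n"
    have "real n powr (-\<alpha> - 2) \<le> real n powr (-\<alpha> - 1)" using n by (intro powr_mono) auto
    then have "\<bar>C\<bar> * real n powr (-\<alpha> - 2) \<le> \<bar>C\<bar> * real n powr (-\<alpha> - 1)" by (intro mult_left_mono) auto
    moreover have "C * real n powr (-\<alpha> - 2) \<le> \<bar>C\<bar> * real n powr (-\<alpha> - 2)" by (intro mult_right_mono) auto
    moreover have "\<bar>rGamma (-\<alpha>) * real n powr (-\<alpha> - 1)\<bar> = \<bar>rGamma (-\<alpha>)\<bar> * real n powr (-\<alpha> - 1)"
      by (simp add: abs_mult)
    moreover have "\<bar>gcoef \<alpha> n\<bar> - \<bar>rGamma (-\<alpha>) * real n powr (-\<alpha> - 1)\<bar>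
       \<le> \<bar>gcoef \<alpha> n - rGamma (-\<alpha>) * real n powr (-\<alpha> - 1)\<bar>" by (rule abs_triangle_ineq2)
    ultimately show "\<bar>gcoef \<alpha> n\<bar> \<le> (\<bar>rGamma (-\<alpha>)\<bar> + \<bar>C\<bar>) * real n powr (-\<alpha> - 1)"
      using C[OF n] unfolding distrib_right by linarith
  qed
qed

lemma Suc_powr_lim:
  assumes "0 < (\<alpha>::real)"
  shows "(\<lambda>N. real (Suc N) powr (-\<alpha>)) \<longlonglongrightarrow> 0"
proof -
  have s: "-\<alpha> < 0" using assms by linarith
  have "(\<lambda>N. real N powr (-\<alpha>)) \<longlonglongrightarrow> 0"
    using tendsto_neg_powr[OF s filterlim_real_sequentially] .
  then show ?thesis by (rule LIMSEQ_Suc)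
qed

lemma gcoef_sums0:
  fixes \<alpha> :: real
  assumes "0 < \<alpha>" "\<alpha> < 1"
  shows "gcoef \<alpha> sums 0"
proof -
  obtain C where C: "\<And>n. 1 \<le> n \<Longrightarrow> \<bar>gcoef \<alpha> n\<bar> \<le> C * real n powr (-\<alpha> - 1)"
    using gcoef_bound[OF assms] by blast
  have part: "(\<Sum>m<Suc N. gcoef \<alpha> m) = - (real (Suc N) * gcoef \<alpha> (Suc N)) / \<alpha>" for N
  proof -
    have "(\<Sum>m<Suc N. gcoef \<alpha> m) = gcoef (\<alpha> - 1) N"
      using gcoef_partial[of \<alpha> N] by (simp add: lessThan_Suc_atMost)
    also have "\<dots> = - (real (Suc N) * gcoef \<alpha> (Suc N)) / \<alpha>"
    proof -
      have "real (Suc N) * gcoef \<alpha> (Suc N) = - ((-1)^N * (real (Suc N) * (\<alpha> gchoose Suc N)))"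
        unfolding gcoef_def by simp
      also have "\<dots> = - ((-1)^N * (\<alpha> * (\<alpha> - 1 gchoose N)))"
        by (simp only: gbinomial_absorption)
      finally have "real (Suc N) * gcoef \<alpha> (Suc N) = - (\<alpha> * gcoef (\<alpha> - 1) N)"
        unfolding gcoef_def by simp
      then show ?thesis using assms by simp
    qed
    finally show ?thesis .
  qed
  have b: "eventually (\<lambda>N. norm (real (Suc N) * gcoef \<alpha> (Suc N)) \<le> C * real (Suc N) powr (-\<alpha>)) sequentially"
  proof (intro always_eventually allI)
    fix N
    have "norm (real (Suc N) * gcoef \<alpha> (Suc N)) \<le> real (Suc N) * (C * real (Suc N) powr (-\<alpha> - 1))"
      unfolding real_norm_def abs_mult abs_of_nat using C[of "Suc N"] by (intro mult_left_mono) auto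
    also have "\<dots> = C * real (Suc N) powr (-\<alpha>)"
    proof -
      have "real (Suc N) * real (Suc N) powr (-\<alpha> - 1) = real (Suc N) powr (-\<alpha>)"
        using powr_mult_self[of "real (Suc N)" "-\<alpha> - 1"] by simp
      then show ?thesis by (simp add: algebra_simps)
    qed
    finally show "norm (real (Suc N) * gcoef \<alpha> (Suc N)) \<le> C * real (Suc N) powr (-\<alpha>)" .
  qed
  have "(\<lambda>N. real (Suc N) powr (-\<alpha>)) \<longlonglongrightarrow> 0" by (rule Suc_powr_lim[OF assms(1)])
  then have "(\<lambda>N. C * real (Suc N) powr (-\<alpha>)) \<longlonglongrightarrow> 0" by (rule tendsto_mult_right_zero)
  then have l: "(\<lambda>N. real (Suc N) * gcoef \<alpha> (Suc N)) \<longlonglongrightarrow> 0" by (rule Lim_null_comparison[OF b])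
  have "(\<lambda>N. - (real (Suc N) * gcoef \<alpha> (Suc N)) / \<alpha>) \<longlonglongrightarrow> - 0 / \<alpha>"
    by (rule tendsto_divide[OF tendsto_minus[OF l] tendsto_const]) (use assms in simp)
  moreover have "(\<lambda>N. \<Sum>m<Suc N. gcoef \<alpha> m) = (\<lambda>N. - (real (Suc N) * gcoef \<alpha> (Suc N)) / \<alpha>)"
    by (rule ext, rule part)
  ultimately have "(\<lambda>N. \<Sum>m<Suc N. gcoef \<alpha> m) \<longlonglongrightarrow> 0"
    by (simp only: minus_zero div_0)
  then have "(\<lambda>N. sum (gcoef \<alpha>) {..<Suc N}) \<longlonglongrightarrow> 0" .
  then have "(\<lambda>N. sum (gcoef \<alpha>) {..<N}) \<longlonglongrightarrow> 0" by (rule LIMSEQ_imp_Suc)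
  then show ?thesis unfolding sums_def .
qed

lemma g1_abs_summable:
  fixes \<alpha> :: real
  assumes "0 < \<alpha>" "\<alpha> < 1"
  shows "summable (\<lambda>j. \<bar>gcoef (1 - \<alpha>) j\<bar>)"
proof -
  have neg: "gcoef (1 - \<alpha>) (Suc j) \<le> 0" for j
  proof (induction j)
    case 0 then show ?case using assms by (simp add: gcoef_Suc gcoef_def)
  next
    case (Suc j)
    have "gcoef (1 - \<alpha>) (Suc (Suc j)) = gcoef (1 - \<alpha>) (Suc j) * ((real j + \<alpha>) / (real j + 2))"
      by (subst gcoef_Suc) (simp add: field_simps)
    also have "\<dots> \<le> 0" using Suc assms by (intro mult_nonpos_nonneg) auto
    finally show ?case .
  qed
  have g0: "gcoef (1 - \<alpha>) 0 = 1" by (simp add: gcoef_def)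
  have ps: "0 \<le> (\<Sum>j<n. gcoef (1 - \<alpha>) j)" for n
  proof (cases n)
    case (Suc N)
    have "(\<Sum>j<n. gcoef (1 - \<alpha>) j) = gcoef (- \<alpha>) N"
      using gcoef_partial[of "1 - \<alpha>" N] Suc by (simp add: lessThan_Suc_atMost)
    also have "\<dots> \<ge> 0" unfolding gcoef_poch using assms by (simp add: pochhammer_nonneg)
    finally show ?thesis by simp
  qed simp
  have absj: "\<bar>gcoef (1 - \<alpha>) j\<bar> = (if j = 0 then 2 else 0) - gcoef (1 - \<alpha>) j" for j
    using neg[of "j - 1"] g0 by (cases j) auto
  show ?thesis
  proof (rule summableI_nonneg_bounded[where x = 2])
    fix n
    have "(\<Sum>j<n. \<bar>gcoef (1 - \<alpha>) j\<bar>) = (\<Sum>j<n. (if j = 0 then 2 else 0)) - (\<Sum>j<n. gcoef (1 - \<alpha>) j)"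
      unfolding absj by (simp add: sum_subtractf)
    also have "(\<Sum>j<n. (if j = 0 then 2 else 0 :: real)) \<le> 2"
      by (cases n) (simp_all add: sum.delta)
    finally show "(\<Sum>j<n. \<bar>gcoef (1 - \<alpha>) j\<bar>) \<le> 2" using ps[of n] by linarith
  qed simp
qed



lemma conv_bound:
  fixes \<alpha> :: real
  assumes "0 < \<alpha>" "1 \<le> m"
  shows "\<bar>real (k + m) powr (-\<alpha> - 1) - real m powr (-\<alpha> - 1)\<bar> \<le> (\<alpha> + 1) * real k * real m powr (-\<alpha> - 2)"
proof -
  have "\<bar>real m powr (-(\<alpha> + 1)) - real (k + m) powr (-(\<alpha> + 1))\<bar>
        \<le> (\<alpha> + 1) * (real (k + m) - real m) * real m powr (-(\<alpha> + 1) - 1)"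
    using assms by (intro powr_diff_bound) auto
  moreover have e1: "-(\<alpha> + 1) = -\<alpha> - 1" and e2: "-(\<alpha> + 1) - 1 = -\<alpha> - 2" by simp_all
  ultimately show ?thesis unfolding e1 e2 by (simp add: abs_minus_commute)
qed

lemma tail_bound:
  fixes f :: "nat \<Rightarrow> real" and \<beta> D :: real
  assumes f0: "f sums 0" and b: "0 < \<beta>" and M: "1 \<le> M"
    and fb: "\<And>m. M \<le> m \<Longrightarrow> \<bar>f m\<bar> \<le> D * real m powr (-\<beta> - 1)" and N: "M \<le> N"
  shows "\<bar>\<Sum>m<Suc N. f m\<bar> \<le> D / \<beta> * real N powr (-\<beta>)"
proof -
  define S where "S = (\<Sum>m<Suc N. f m)"
  have D0: "0 \<le> D"
  proof -
    have "0 \<le> D * real M powr (-\<beta> - 1)" using fb[of M] by (meson abs_ge_zero order.trans order_refl)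
    moreover have "0 < real M powr (-\<beta> - 1)" using M by simp
    ultimately show ?thesis by (simp add: zero_le_mult_iff)
  qed
  have s1: "(\<lambda>j. f (j + Suc N)) sums (- S)"
    using sums_split_initial_segment[OF f0, of "Suc N"] unfolding S_def by simp
  define t where "t = (\<lambda>j. real (j + N) powr (-\<beta>))"
  have tl: "t \<longlonglongrightarrow> 0"
  proof -
    have s: "-\<beta> < 0" using b by linarith
    have "(\<lambda>j. real j powr (-\<beta>)) \<longlonglongrightarrow> 0"
      using tendsto_neg_powr[OF s filterlim_real_sequentially] .
    then show ?thesis unfolding t_def by (rule LIMSEQ_ignore_initial_segment)
  qed
  have "(\<lambda>j. t (Suc j) - t j) sums (0 - t 0)" by (rule telescope_sums[OF tl])
  then have "(\<lambda>j. D / \<beta> * (- (t (Suc j) - t j))) sums (D / \<beta> * (- (0 - t 0)))"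
    by (intro sums_mult sums_minus)
  then have h: "(\<lambda>j. D / \<beta> * (t j - t (Suc j))) sums (D / \<beta> * real N powr (-\<beta>))"
    unfolding t_def by simp
  have pt: "\<bar>f (j + Suc N)\<bar> \<le> D / \<beta> * (t j - t (Suc j))" for j
  proof -
    have a: "0 < real (j + N)" using M N by simp
    have "\<beta> * (real (Suc (j + N)) - real (j + N)) * real (Suc (j + N)) powr (-\<beta> - 1)
          \<le> real (j + N) powr (-\<beta>) - real (Suc (j + N)) powr (-\<beta>)"
      using a b by (intro powr_diff_lower) auto
    then have "real (Suc (j + N)) powr (-\<beta> - 1) \<le> (t j - t (Suc j)) / \<beta>"
      unfolding t_def using b by (simp add: field_simps)
    then have "D * real (j + Suc N) powr (-\<beta> - 1) \<le> D * ((t j - t (Suc j)) / \<beta>)"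
      using D0 by (intro mult_left_mono) auto
    moreover have "\<bar>f (j + Suc N)\<bar> \<le> D * real (j + Suc N) powr (-\<beta> - 1)"
      by (rule fb) (use N in simp)
    ultimately show ?thesis by simp
  qed
  have "- S \<le> D / \<beta> * real N powr (-\<beta>)"
    by (rule sums_le[OF _ s1 h]) (use pt in \<open>simp add: abs_le_iff\<close>)
  moreover have "S \<le> D / \<beta> * real N powr (-\<beta>)"
  proof -
    have "(\<lambda>j. - f (j + Suc N)) sums (- (- S))" by (rule sums_minus[OF s1])
    then show ?thesis
      by (intro sums_le[OF _ _ h, of "\<lambda>j. - f (j + Suc N)"]) (use pt in \<open>auto simp add: abs_le_iff\<close>)
  qed
  ultimately show ?thesis unfolding S_def by (simp add: abs_le_iff)
qed

lemma psi_decomp: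
  assumes "\<And>m. phi \<alpha> k i m = c * gcoef (\<alpha> - 1) m + R m"
  shows "psi \<alpha> k i n = c * (if n = 0 then 1 else 0) + (\<Sum>m\<le>n. R m * gcoef (1 - \<alpha>) (n - m))"
proof -
  have "psi \<alpha> k i n = c * (\<Sum>m=0..n. gcoef (1 - \<alpha>) (n - m) * gcoef (\<alpha> - 1) m)
        + (\<Sum>m=0..n. gcoef (1 - \<alpha>) (n - m) * R m)"
    unfolding psi_def assms by (simp add: sum.distrib sum_distrib_left algebra_simps)
  also have "(\<Sum>m=0..n. gcoef (1 - \<alpha>) (n - m) * gcoef (\<alpha> - 1) m)
        = (-1)^n * (\<Sum>m=0..n. ((\<alpha> - 1) gchoose m) * ((1 - \<alpha>) gchoose (n - m)))"
    unfolding sum_distrib_left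
  proof (intro sum.cong refl)
    fix m assume "m \<in> {0..n}"
    then have "(-1::real)^(n - m) * (-1)^m = (-1)^n" by (simp add: power_add[symmetric])
    then show "gcoef (1 - \<alpha>) (n - m) * gcoef (\<alpha> - 1) m = (-1)^n * (((\<alpha> - 1) gchoose m) * ((1 - \<alpha>) gchoose (n - m)))"
      unfolding gcoef_def by (metis (no_types, lifting) mult.assoc mult.commute)
  qed
  also have "(\<Sum>m=0..n. ((\<alpha> - 1) gchoose m) * ((1 - \<alpha>) gchoose (n - m))) = (if n = 0 then 1 else 0)"
    using gbinomial_Vandermonde[of "\<alpha> - 1" "1 - \<alpha>" n] by (simp add: gbinomial_0_left)
  finally show ?thesis by (simp add: atLeast0AtMost mult.commute)
qed

theorem lemma4p3:
  fixes \<alpha> :: real and k i :: nat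
  assumes "0 < \<alpha>" "\<alpha> < 1" "1 \<le> i" "i \<le> k" "k \<le> 6"
  shows "summable (\<lambda>n. \<bar>psi \<alpha> k i n\<bar>)"
proof -
  note a = assms(1,2) and ik = assms(3,4)
  obtain A C1 where om: "\<And>m. 3 * k \<le> m \<Longrightarrow>
      \<bar>omega \<alpha> k i m - A * real (k + m) powr (-\<alpha> - 1)\<bar> \<le> C1 * real (k + m) powr (-\<alpha> - 2)"
    using omega_asym[OF a ik] by blast
  define r where "r = rGamma (-\<alpha>)"
  have r0: "r \<noteq> 0" unfolding r_def by (rule bseq_lim(2)[OF a])
  obtain Cg where gA: "\<And>n. 1 \<le> n \<Longrightarrow> \<bar>gcoef \<alpha> n - r * real n powr (-\<alpha> - 1)\<bar> \<le> Cg * real n powr (-\<alpha> - 2)"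
    using gcoef_asym[OF a] unfolding r_def by blast
  define c where "c = A / r"
  have Ac: "A = c * r" unfolding c_def using r0 by simp
  define e where "e = (\<lambda>m. omega \<alpha> k i m - c * gcoef \<alpha> m)"
  define M where "M = 3 * k + 1"
  define Ce where "Ce = \<bar>C1\<bar> + \<bar>A\<bar> * ((\<alpha> + 1) * real k) + \<bar>c\<bar> * \<bar>Cg\<bar>"
  have eb: "\<bar>e m\<bar> \<le> Ce * real m powr (-(\<alpha> + 1) - 1)" if m: "M \<le> m" for m
  proof -
    have m1: "1 \<le> m" and m3: "3 * k \<le> m" using m unfolding M_def by auto
    define P where "P = real m powr (-\<alpha> - 2)"
    have P0: "0 \<le> P" unfolding P_def by simp
    have t1: "\<bar>omega \<alpha> k i m - A * real (k + m) powr (-\<alpha> - 1)\<bar> \<le> \<bar>C1\<bar> * P"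
    proof -
      have "real (k + m) powr (-\<alpha> - 2) \<le> P" unfolding P_def using m1 a by (intro powr_mono2') auto
      then have "C1 * real (k + m) powr (-\<alpha> - 2) \<le> \<bar>C1\<bar> * P"
        by (meson abs_ge_self abs_ge_zero mult_mono order.trans powr_ge_zero)
      then show ?thesis using om[OF m3] by linarith
    qed
    have t2: "\<bar>A * real (k + m) powr (-\<alpha> - 1) - A * real m powr (-\<alpha> - 1)\<bar> \<le> \<bar>A\<bar> * ((\<alpha> + 1) * real k) * P"
    proof -
      have "\<bar>A * real (k + m) powr (-\<alpha> - 1) - A * real m powr (-\<alpha> - 1)\<bar>
          = \<bar>A\<bar> * \<bar>real (k + m) powr (-\<alpha> - 1) - real m powr (-\<alpha> - 1)\<bar>"
        by (simp add: abs_mult[symmetric] algebra_simps)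
      also have "\<dots> \<le> \<bar>A\<bar> * ((\<alpha> + 1) * real k * P)"
        unfolding P_def by (intro mult_left_mono conv_bound a m1) auto
      finally show ?thesis by (simp add: mult.assoc)
    qed
    have t3: "\<bar>c * gcoef \<alpha> m - A * real m powr (-\<alpha> - 1)\<bar> \<le> \<bar>c\<bar> * \<bar>Cg\<bar> * P"
    proof -
      have "\<bar>c * gcoef \<alpha> m - A * real m powr (-\<alpha> - 1)\<bar> = \<bar>c\<bar> * \<bar>gcoef \<alpha> m - r * real m powr (-\<alpha> - 1)\<bar>"
        unfolding Ac by (simp add: abs_mult[symmetric] algebra_simps)
      also have "\<dots> \<le> \<bar>c\<bar> * (\<bar>Cg\<bar> * P)"
      proof (intro mult_left_mono)
        show "\<bar>gcoef \<alpha> m - r * real m powr (-\<alpha> - 1)\<bar> \<le> \<bar>Cg\<bar> * P"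
          using gA[OF m1] P0 unfolding P_def by (meson abs_ge_self mult_right_mono order.trans)
      qed simp
      finally show ?thesis by (simp add: mult.assoc)
    qed
    have "\<bar>e m\<bar> \<le> \<bar>C1\<bar> * P + \<bar>A\<bar> * ((\<alpha> + 1) * real k) * P + \<bar>c\<bar> * \<bar>Cg\<bar> * P"
    proof -
      define u1 where "u1 = omega \<alpha> k i m - A * real (k + m) powr (-\<alpha> - 1)"
      define u2 where "u2 = A * real (k + m) powr (-\<alpha> - 1) - A * real m powr (-\<alpha> - 1)"
      define u3 where "u3 = c * gcoef \<alpha> m - A * real m powr (-\<alpha> - 1)"
      have em: "e m = u1 + u2 - u3" unfolding e_def u1_def u2_def u3_def by simp
      have tri: "\<bar>u1 + u2 - u3\<bar> \<le> \<bar>u1\<bar> + \<bar>u2\<bar> + \<bar>u3\<bar>"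
        by (metis abs_triangle_ineq abs_triangle_ineq4 add_right_mono order.trans)
      have "\<bar>u1\<bar> + \<bar>u2\<bar> + \<bar>u3\<bar> \<le> \<bar>C1\<bar> * P + \<bar>A\<bar> * ((\<alpha> + 1) * real k) * P + \<bar>c\<bar> * \<bar>Cg\<bar> * P"
        unfolding u1_def u2_def u3_def by (intro add_mono t1 t2 t3)
      then show ?thesis unfolding em using tri by (rule order.trans[rotated])
    qed
    also have "\<dots> = Ce * P" unfolding Ce_def by (simp add: algebra_simps)
    finally show ?thesis unfolding P_def by (simp add: algebra_simps)
  qed
  have esum: "e sums 0"
  proof -
    have "(\<lambda>m. omega \<alpha> k i m - c * gcoef \<alpha> m) sums (0 - c * 0)"
      by (intro sums_diff sums_mult omega_sums0[OF a ik] gcoef_sums0[OF a])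
    then show ?thesis unfolding e_def by simp
  qed
  define R where "R = (\<lambda>N. phi \<alpha> k i N - c * gcoef (\<alpha> - 1) N)"
  have R_eq: "R N = (\<Sum>m<Suc N. e m)" for N
    unfolding R_def e_def phi_def gcoef_partial[symmetric] sum_subtractf sum_distrib_left
    by (simp add: atLeast0AtMost lessThan_Suc_atMost)
  have Rb: "norm \<bar>R N\<bar> \<le> Ce / (\<alpha> + 1) * real N powr (-(\<alpha> + 1))" if N: "M \<le> N" for N
  proof -
    have "\<bar>\<Sum>m<Suc N. e m\<bar> \<le> Ce / (\<alpha> + 1) * real N powr (-(\<alpha> + 1))"
      by (rule tail_bound[OF esum _ _ eb N]) (use a in \<open>simp_all add: M_def\<close>)
    then show ?thesis unfolding R_eq by simp
  qed
  have "summable (\<lambda>N. Ce / (\<alpha> + 1) * real N powr (-(\<alpha> + 1)))"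
    by (intro summable_mult) (use a in \<open>simp add: summable_real_powr_iff\<close>)
  then have Rs: "summable (\<lambda>N. \<bar>R N\<bar>)" by (rule summable_comparison_test'[OF _ Rb])
  have g1s: "summable (\<lambda>j. \<bar>gcoef (1 - \<alpha>) j\<bar>)" by (rule g1_abs_summable[OF a])
  have cp: "summable (\<lambda>n. \<Sum>m\<le>n. \<bar>R m\<bar> * \<bar>gcoef (1 - \<alpha>) (n - m)\<bar>)"
    by (rule summable_Cauchy_product) (use Rs g1s in simp_all)
  have sd: "summable (\<lambda>n. if n = 0 then \<bar>c\<bar> else 0)"
    using sums_single[of 0 "\<lambda>_. \<bar>c\<bar>"] by (auto simp: sums_iff)
  have dec: "psi \<alpha> k i n = c * (if n = 0 then 1 else 0) + (\<Sum>m\<le>n. R m * gcoef (1 - \<alpha>) (n - m))" for n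
    by (rule psi_decomp) (simp add: R_def)
  show ?thesis
  proof (rule summable_comparison_test'[OF summable_add[OF sd cp]])
    fix n :: nat
    have h1: "\<bar>\<Sum>m\<le>n. R m * gcoef (1 - \<alpha>) (n - m)\<bar> \<le> (\<Sum>m\<le>n. \<bar>R m\<bar> * \<bar>gcoef (1 - \<alpha>) (n - m)\<bar>)"
      by (rule order.trans[OF sum_abs]) (simp add: abs_mult)
    have h2: "\<bar>c * (if n = 0 then 1 else 0)\<bar> \<le> (if n = 0 then \<bar>c\<bar> else 0)" by simp
    have "\<bar>psi \<alpha> k i n\<bar> \<le> \<bar>c * (if n = 0 then 1 else 0)\<bar> + \<bar>\<Sum>m\<le>n. R m * gcoef (1 - \<alpha>) (n - m)\<bar>"
      unfolding dec by (rule abs_triangle_ineq)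
    also have "\<dots> \<le> (if n = 0 then \<bar>c\<bar> else 0) + (\<Sum>m\<le>n. \<bar>R m\<bar> * \<bar>gcoef (1 - \<alpha>) (n - m)\<bar>)"
      by (rule add_mono[OF h2 h1])
    finally show "norm \<bar>psi \<alpha> k i n\<bar> \<le> (if n = 0 then \<bar>c\<bar> else 0) + (\<Sum>m\<le>n. \<bar>R m\<bar> * \<bar>gcoef (1 - \<alpha>) (n - m)\<bar>)"
      by simp
  qed
qed

end
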